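(* Let $d\ge3$, $R\in\mathbb N$, $p\in(0,1)$, $\mathsf v>0$, and let $\mu$ be a stationary probability measure for the voter model with range $R$ on dynamical percolation with parameters $\mathsf v,p$. Let $k\in\mathbb N$, $C=\{x_1,\dots,x_k\}\subseteq\mathbb Z^d$ with distinct $x_i$, and $E,F$ finite disjoint sets of edges. Let $(X^1_t,\dots,X^k_t,\mathbb A_t,\mathbb B_t)$ be the independent-walkers-with-knowledge chain started from $(x_1,\dots,x_k,E,F)$, with law $\mathbf P_{C,E,F}$, and $\mathcal X_t=\{X^1_t,\dots,X^k_t\}$. Then $\mathbf E_{C,E,F}[\bar\mu(\mathcal X_t,\mathbb A_t,\mathbb B_t)]$ converges as $t\to\infty$.
   Context: For a measure $\mu$ on $\{0,1\}^{\mathbb Z^d}\times\{0,1\}^{E(\mathbb Z^d)}$, $\bar\mu(C,E,F):=p^{-|E|}(1-p)^{-|F|}\mu(\eta\equiv1\text{ on }C,\ \zeta\equiv1\text{ on }E,\ \zeta\equiv0\text{ on }F)$. $B_1(x,R)=\{y:|y-x|_1\le R\}$, $|B_1(R)|$ its cardinality, $E_1(x,R)$ the nearest-neighbour edges with both endpoints in $B_1(x,R)$. Dynamical percolation: each edge independently flips 0→1 at rate $p\mathsf v$ and 1→0 at rate $(1-p)\mathsf v$. The voter model with range $R$ on dynamical percolation is the process $(\eta_t,\zeta_t)$ where $\zeta_t$ is dynamical percolation and, for each ordered pair $(x,y)$ with $1\le|x-y|_1\le R$, at rate $1/(|B_1(R)|-1)$ site $x$ adopts $\eta_t(y)$ provided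 $x,y$ are joined by a path of $\zeta_t$-open edges with vertices in $B_1(x,R)$. The independent-walkers-with-knowledge chain on states $(\mathbf x,E,F)$, $\mathbf x=(x_1,\dots,x_k)\in(\mathbb Z^d)^k$, $E,F$ disjoint finite edge sets, has rates: (i) $(\mathbf x,E,F)\to(\mathbf x,E\setminus\{e\},F\setminus\{e\})$ at rate $\mathsf v$ for each $e\in E\cup F$; (ii) for each $i$, $y\in B_1(x_i,R)\setminus\{x_i\}$ and each partition $(E',F')$ of $E_1(x_i,R)\setminus(E\cup F)$, at rate $p^{|E'|}(1-p)^{|F'|}/(|B_1(R)|-1)$ the chain jumps to $(\mathbf x^{i,y},E\cup E',F\cup F')$ (the $i$-th coordinate replaced by $y$) if $x_i,y$ are joined by a path of edges of $E\cup E'$ with vertices in $B_1(x_i,R)$, and to $(\mathbf x,E\cup E',F\cup F')$ otherwise. (This is the law of $k$ independent range-$R$ random walks on one dynamical percolation environment started from stationarity conditioned on edges of $E$ open and of $F$ closed, together with the sets of known-open/known-closed edges.) *)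

theory Defs
  imports "HOL-Analysis.Analysis" "HOL-Probability.Probability"
begin

definition l1norm :: "int ^ 'd \<Rightarrow> int" where
  "l1norm x = (\<Sum>i\<in>UNIV. \<bar>x $ i\<bar>)"

definition adj :: "int ^ 'd \<Rightarrow> int ^ 'd \<Rightarrow> bool" where
  "adj x y \<longleftrightarrow> l1norm (x - y) = 1"

definition edges :: "(int ^ 'd) set set" where
  "edges = {{x, y} | x y. adj x y}"

definition ball1 :: "int ^ 'd \<Rightarrow> nat \<Rightarrow> (int ^ 'd) set" where
  "ball1 x R = {y. l1norm (y - x) \<le> int R}"

definition edges_ball :: "int ^ 'd \<Rightarrow> nat \<Rightarrow> (int ^ 'd) set set" where
  "edges_ball x R = {{u, w} | u w. adj u w \<and> u \<in> ball1 x R \<and> w \<in> ball1 x R}"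

definition jrate :: "'d::finite itself \<Rightarrow> nat \<Rightarrow> real" where
  "jrate _ R = 1 / (real (card (ball1 (0 :: int ^ 'd) R)) - 1)"

definition conn :: "((int ^ 'd) set \<Rightarrow> bool) \<Rightarrow> (int ^ 'd) set \<Rightarrow> int ^ 'd \<Rightarrow> int ^ 'd \<Rightarrow> bool" where
  "conn op B u w = (\<lambda>a b. a \<in> B \<and> b \<in> B \<and> adj a b \<and> op {a, b})\<^sup>*\<^sup>* u w"

text \<open>A configuration (eta, zeta) in {0,1}^{Z^d} x {0,1}^{E(Z^d)} (True = 1).\<close>
definition cfg_space :: "((int ^ 'd \<Rightarrow> bool) \<times> ((int ^ 'd) set \<Rightarrow> bool)) measure" where
  "cfg_space = (PiM UNIV (\<lambda>_. count_space UNIV)) \<Otimes>\<^sub>M (PiM edges (\<lambda>_. count_space UNIV))"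

definition mubar :: "real \<Rightarrow> ((int ^ 'd \<Rightarrow> bool) \<times> ((int ^ 'd) set \<Rightarrow> bool)) measure
    \<Rightarrow> (int ^ 'd) set \<Rightarrow> (int ^ 'd) set set \<Rightarrow> (int ^ 'd) set set \<Rightarrow> real" where
  "mubar p \<mu> C E F = inverse (p ^ card E * (1 - p) ^ card F) *
     measure \<mu> {c \<in> space \<mu>. (\<forall>x\<in>C. fst c x) \<and> (\<forall>e\<in>E. snd c e) \<and> (\<forall>e\<in>F. \<not> snd c e)}"

definition cylinder :: "(int ^ 'd) set \<Rightarrow> (int ^ 'd) set set
    \<Rightarrow> ((int ^ 'd \<Rightarrow> bool) \<times> ((int ^ 'd) set \<Rightarrow> bool) \<Rightarrow> real) \<Rightarrow> bool" where
  "cylinder S T f \<longleftrightarrow> (\<forall>c c'. (\<forall>x\<in>S. fst c x = fst c' x) \<longrightarrow> (\<forall>e\<in>T. snd c e = snd c' e)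
      \<longrightarrow> f c = f c')"

text \<open>Generator of the voter model with range R on dynamical percolation, applied to a
  function depending only on the coordinates in S and T (all other terms of the generator
  vanish for such f).\<close>
definition voter_gen :: "nat \<Rightarrow> real \<Rightarrow> real \<Rightarrow> ('d::finite) itself \<Rightarrow> (int ^ 'd) set \<Rightarrow> (int ^ 'd) set set
    \<Rightarrow> ((int ^ 'd \<Rightarrow> bool) \<times> ((int ^ 'd) set \<Rightarrow> bool) \<Rightarrow> real)
    \<Rightarrow> (int ^ 'd \<Rightarrow> bool) \<times> ((int ^ 'd) set \<Rightarrow> bool) \<Rightarrow> real" where
  "voter_gen R v p D S T f c = (case c of (\<eta>, \<zeta>) \<Rightarrow>
     (\<Sum>x\<in>S. \<Sum>y\<in>{y. 1 \<le> l1norm (x - y) \<and> l1norm (x - y) \<le> int R}.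
         jrate D R * (if conn \<zeta> (ball1 x R) x y then f (\<eta>(x := \<eta> y), \<zeta>) - f (\<eta>, \<zeta>) else 0))
   + (\<Sum>e\<in>T. p * v * (f (\<eta>, \<zeta>(e := True)) - f (\<eta>, \<zeta>))
            + (1 - p) * v * (f (\<eta>, \<zeta>(e := False)) - f (\<eta>, \<zeta>))))"

definition voter_stationary :: "nat \<Rightarrow> real \<Rightarrow> real
    \<Rightarrow> ((int ^ 'd::finite \<Rightarrow> bool) \<times> ((int ^ 'd) set \<Rightarrow> bool)) measure \<Rightarrow> bool" where
  "voter_stationary R v p \<mu> \<longleftrightarrow> prob_space \<mu> \<and> sets \<mu> = sets cfg_space \<and>
     (\<forall>S T f. finite S \<longrightarrow> finite T \<longrightarrow> T \<subseteq> edges \<longrightarrow> cylinder S T f \<longrightarrow>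
        (\<integral>c. voter_gen R v p TYPE('d) S T f c \<partial>\<mu>) = 0)"

type_synonym 'd wstate = "(int ^ 'd) list \<times> (int ^ 'd) set set \<times> (int ^ 'd) set set"

text \<open>Jump rate from state s to a different state s' (self-loops are irrelevant).\<close>
definition wk_rate :: "nat \<Rightarrow> real \<Rightarrow> real \<Rightarrow> ('d::finite) wstate \<Rightarrow> 'd wstate \<Rightarrow> real" where
  "wk_rate R v p s s' = (if s' = s then 0 else (case s of (xs, E, F) \<Rightarrow>
      v * real (card {e \<in> E \<union> F. s' = (xs, E - {e}, F - {e})})
    + (\<Sum>i<length xs. \<Sum>y\<in>ball1 (xs ! i) R - {xs ! i}.
         \<Sum>E'\<in>Pow (edges_ball (xs ! i) R - (E \<union> F)).
           (let F' = edges_ball (xs ! i) R - (E \<union> F) - E' in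
            if s' = ((if conn (\<lambda>e. e \<in> E \<union> E') (ball1 (xs ! i) R) (xs ! i) y
                      then xs[i := y] else xs), E \<union> E', F \<union> F')
            then p ^ card E' * (1 - p) ^ card F' * jrate TYPE('d) R else 0))))"

definition wk_supp :: "nat \<Rightarrow> real \<Rightarrow> real \<Rightarrow> ('d::finite) wstate \<Rightarrow> 'd wstate set" where
  "wk_supp R v p s = {s'. wk_rate R v p s s' \<noteq> 0}"

definition wk_out :: "nat \<Rightarrow> real \<Rightarrow> real \<Rightarrow> ('d::finite) wstate \<Rightarrow> real" where
  "wk_out R v p s = (\<Sum>s'\<in>wk_supp R v p s. wk_rate R v p s s')"

text \<open>Probability to be at s' at time t having made exactly n jumps (minimal chain).\<close>
fun wk_trans_n :: "nat \<Rightarrow> real \<Rightarrow> real \<Rightarrow> nat \<Rightarrow> real \<Rightarrow> ('d::finite) wstate \<Rightarrow> 'd wstate \<Rightarrow> real" where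
  "wk_trans_n R v p 0 t s s' = (if s = s' then exp (- wk_out R v p s * t) else 0)"
| "wk_trans_n R v p (Suc n) t s s' =
     (LINT u:{0..t}|lborel. exp (- wk_out R v p s * u) *
        (\<Sum>s''\<in>wk_supp R v p s. wk_rate R v p s s'' * wk_trans_n R v p n (t - u) s'' s'))"

definition wk_trans :: "nat \<Rightarrow> real \<Rightarrow> real \<Rightarrow> real \<Rightarrow> ('d::finite) wstate \<Rightarrow> 'd wstate \<Rightarrow> real" where
  "wk_trans R v p t s s' = (\<Sum>n. wk_trans_n R v p n t s s')"

definition wk_expect :: "nat \<Rightarrow> real \<Rightarrow> real \<Rightarrow> ((int ^ 'd::finite \<Rightarrow> bool) \<times> ((int ^ 'd) set \<Rightarrow> bool)) measure
    \<Rightarrow> real \<Rightarrow> 'd wstate \<Rightarrow> real" where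
  "wk_expect R v p \<mu> t s0 = infsum (\<lambda>s'. wk_trans R v p t s0 s' *
      mubar p \<mu> (set (fst s')) (fst (snd s')) (snd (snd s'))) UNIV"

end

theory Submission
  imports Defs "HOL-Library.FuncSet"
begin

lemma comp_le_l1norm: "\<bar>x $ i\<bar> \<le> l1norm (x::int^'d::finite)"
  unfolding l1norm_def by (rule member_le_sum) auto

lemma finite_ball1: "finite (ball1 (x::int^'d::finite) R)"
proof -
  have "ball1 x R \<subseteq> vec_lambda ` (PiE UNIV (\<lambda>i. {x$i - int R .. x$i + int R}))"
  proof
    fix y assume "y \<in> ball1 x R"
    hence "\<bar>(y - x) $ i\<bar> \<le> int R" for i
      using comp_le_l1norm[of "y-x" i] unfolding ball1_def by auto
    hence "(\<lambda>i. y $ i) \<in> PiE UNIV (\<lambda>i. {x$i - int R .. x$i + int R})"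
      by (auto simp: abs_le_iff) (smt (verit))+
    thus "y \<in> vec_lambda ` (PiE UNIV (\<lambda>i. {x$i - int R .. x$i + int R}))"
      by (intro image_eqI[where x="\<lambda>i. y $ i"]) auto
  qed
  moreover have "finite (PiE (UNIV::'d set) (\<lambda>i. {x$i - int R .. x$i + int R}))"
    by (intro finite_PiE) auto
  ultimately show ?thesis by (meson finite_imageI finite_subset)
qed

lemma finite_edges_ball: "finite (edges_ball (x::int^'d::finite) R)"
proof -
  have "edges_ball x R \<subseteq> (\<lambda>(u,w). {u,w}) ` (ball1 x R \<times> ball1 x R)"
    unfolding edges_ball_def by auto
  thus ?thesis using finite_ball1 by (meson finite_SigmaI finite_imageI finite_subset)
qed

lemma edges_ball_sub: "edges_ball x R \<subseteq> edges"
  unfolding edges_ball_def edges_def by auto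

lemma card_ball1_ge1: "card (ball1 (x::int^'d::finite) R) \<ge> 1"
proof -
  have "x \<in> ball1 x R" by (simp add: ball1_def l1norm_def)
  thus ?thesis using finite_ball1 by (metis One_nat_def Suc_leI card_gt_0_iff empty_iff)
qed

lemma jrate_nonneg: "jrate TYPE('d::finite) R \<ge> 0"
  using card_ball1_ge1[of "0::int^'d" R] unfolding jrate_def by simp


lemma integral_reflect_shift:
  fixes f :: "real \<Rightarrow> real"
  shows "integral {0..t} (\<lambda>u. f (t - u)) = integral {0..t} f"
proof -
  define g where "g = (\<lambda>x. f (- x))"
  have "integral {0..t} (\<lambda>u. f (t - u)) = integral {0..t} (g \<circ> (+) (-t))"
    by (simp add: g_def o_def)
  also have "\<dots> = integral {-t..0} g" by (subst integral_shift_Icc_real) simp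
  also have "\<dots> = integral {0..t} f" using Henstock_Kurzweil_Integration.integral_reflect_real[of t 0 f] by (simp add: g_def)
  finally show ?thesis .
qed

lemma conv_cont_aux:
  fixes G :: "real \<Rightarrow> real"
  assumes "continuous_on {0..t} G"
  shows "continuous_on {0..t} (\<lambda>u. exp (- q * u) * G (t - u))"
proof -
  have "continuous_on {0..t} (G \<circ> (\<lambda>u. t - u))"
    by (rule continuous_on_compose) (auto intro!: continuous_intros continuous_on_subset[OF assms])
  thus ?thesis by (auto intro!: continuous_intros simp: o_def)
qed

lemma conv_eq:
  fixes G :: "real \<Rightarrow> real"
  assumes "continuous_on {0..t} G"
  shows "(LINT u:{0..t}|lborel. exp (- q * u) * G (t - u)) = integral {0..t} (\<lambda>u. exp (- q * u) * G (t - u))"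
  by (rule set_borel_integral_eq_integral(2), rule borel_integrable_atLeastAtMost', rule conv_cont_aux[OF assms])

lemma conv_eq2:
  fixes G :: "real \<Rightarrow> real"
  shows "integral {0..t} (\<lambda>u. exp (- q * u) * G (t - u)) = exp (- q * t) * integral {0..t} (\<lambda>w. exp (q * w) * G w)"
proof -
  have "integral {0..t} (\<lambda>u. exp (- q * u) * G (t - u)) = integral {0..t} (\<lambda>w. exp (- q * (t - w)) * G w)"
    using integral_reflect_shift[where f="\<lambda>w. exp (- q * (t - w)) * G w" and t=t] by simp
  also have "\<dots> = integral {0..t} (\<lambda>w. exp (- q * t) * (exp (q * w) * G w))"
    by (rule integral_cong) (simp add: algebra_simps flip: exp_add)
  also have "\<dots> = exp (- q * t) * integral {0..t} (\<lambda>w. exp (q * w) * G w)"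
    by simp
  finally show ?thesis .
qed

lemma conv_cont:
  fixes G :: "real \<Rightarrow> real"
  assumes "\<And>T. continuous_on {0..T} G"
  shows "continuous_on {0..T} (\<lambda>t. LINT u:{0..t}|lborel. exp (- q * u) * G (t - u))"
proof -
  have "continuous_on {0..T} (\<lambda>t. exp (- q * t) * integral {0..t} (\<lambda>w. exp (q * w) * G w))"
    by (intro continuous_intros indefinite_integral_continuous_1 integrable_continuous_interval assms)
  moreover have "t \<in> {0..T} \<Longrightarrow> (LINT u:{0..t}|lborel. exp (- q * u) * G (t - u)) = exp (- q * t) * integral {0..t} (\<lambda>w. exp (q * w) * G w)" for t
    using conv_eq[OF assms, of t q] conv_eq2[where q=q and G=G and t=t] by simp
  ultimately show ?thesis using continuous_on_cong by (smt (verit))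
qed

lemma nn_if: "0 \<le> (a::real) \<Longrightarrow> 0 \<le> (if c then a else 0)" by simp

context fixes R :: nat and v p :: real
  assumes p0: "0 \<le> p" and p1: "p \<le> 1" and v0: "0 \<le> v"
begin

lemma rate_nonneg: "wk_rate R v p (s::'d::finite wstate) s' \<ge> 0"
  using p0 p1 v0 jrate_nonneg[where 'd='d and R=R]
  unfolding wk_rate_def Let_def
  by (auto split: prod.splits intro!: sum_nonneg add_nonneg_nonneg mult_nonneg_nonneg nn_if)

lemma out_nonneg: "wk_out R v p (s::'d::finite wstate) \<ge> 0"
  unfolding wk_out_def by (intro sum_nonneg rate_nonneg)

lemma trans_n_cont: "continuous_on {0..T} (\<lambda>t. wk_trans_n R v p n t (s::'d::finite wstate) s')"
proof (induction n arbitrary: s s' T)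
  case 0
  then show ?case by (cases "s = s'") (auto intro!: continuous_intros)
next
  case (Suc n)
  show ?case unfolding wk_trans_n.simps
    by (rule conv_cont, intro continuous_intros Suc.IH)
qed

lemma trans_n_Suc_integral:
  "wk_trans_n R v p (Suc n) t (s::'d::finite wstate) s' =
   integral {0..t} (\<lambda>u. exp (- wk_out R v p s * u) *
        (\<Sum>s''\<in>wk_supp R v p s. wk_rate R v p s s'' * wk_trans_n R v p n (t - u) s'' s'))"
  unfolding wk_trans_n.simps
  by (rule conv_eq, intro continuous_intros trans_n_cont)

lemma trans_n_nonneg: "t \<ge> 0 \<Longrightarrow> wk_trans_n R v p n t (s::'d::finite wstate) s' \<ge> 0"
proof (induction n arbitrary: s s' t)
  case 0
  then show ?case by auto
next
  case (Suc n)
  show ?case unfolding trans_n_Suc_integral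
    by (rule integral_nonneg, intro integrable_continuous_interval conv_cont_aux continuous_intros trans_n_cont)
       (auto intro!: mult_nonneg_nonneg sum_nonneg rate_nonneg Suc.IH)
qed

end

lemma exp_integral:
  fixes q t :: real assumes "t \<ge> 0"
  shows "integral {0..t} (\<lambda>u. q * exp (- q * u)) = 1 - exp (- q * t)"
proof -
  have "((\<lambda>u. q * exp (- q * u)) has_integral ((- exp (- q * t)) - (- exp (- q * 0)))) {0..t}"
    apply (rule fundamental_theorem_of_calculus[OF assms])
    apply (auto simp: has_real_derivative_iff_has_vector_derivative[symmetric] intro!: derivative_eq_intros)
    done
  from integral_unique[OF this] show ?thesis by simp
qed

context fixes R :: nat and v p :: real
  assumes p0: "0 \<le> p" and p1: "p \<le> 1" and v0: "0 \<le> v"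
begin

lemma superharm:
  fixes Good :: "'d::finite wstate set" and m :: "'d wstate \<Rightarrow> real"
  assumes closed: "\<And>s. s \<in> Good \<Longrightarrow> wk_supp R v p s \<subseteq> Good"
    and mnn: "\<And>s. s \<in> Good \<Longrightarrow> m s \<ge> 0"
    and harm: "\<And>s. s \<in> Good \<Longrightarrow> (\<Sum>\<sigma>\<in>wk_supp R v p s. wk_rate R v p s \<sigma> * m \<sigma>) \<le> wk_out R v p s * m s"
    and finA: "finite A"
  shows "s \<in> Good \<Longrightarrow> t \<ge> 0 \<Longrightarrow> (\<Sum>n<N. \<Sum>s'\<in>A. wk_trans_n R v p n t s s' * m s') \<le> m s"
proof (induction N arbitrary: s t)
  case 0
  then show ?case using mnn by simp
next
  case (Suc N)
  let ?q = "wk_out R v p s" and ?S = "wk_supp R v p s" and ?r = "wk_rate R v p s"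
  define K where "K \<sigma> w = (\<Sum>n<N. \<Sum>s'\<in>A. wk_trans_n R v p n w \<sigma> s' * m s')" for \<sigma> w
  have Kc: "continuous_on {0..T} (K \<sigma>)" for \<sigma> T
    unfolding K_def by (intro continuous_intros trans_n_cont[OF p0 p1 v0])
  have int1: "(\<lambda>u. exp (- ?q * u) * (\<Sum>\<sigma>\<in>?S. ?r \<sigma> * wk_trans_n R v p n (t - u) \<sigma> s')) integrable_on {0..t}" for n s'
    by (intro integrable_continuous_interval conv_cont_aux continuous_intros trans_n_cont[OF p0 p1 v0])
  have int2: "(\<lambda>u. exp (- ?q * u) * (\<Sum>\<sigma>\<in>?S. ?r \<sigma> * K \<sigma> (t - u))) integrable_on {0..t}"
    by (intro integrable_continuous_interval conv_cont_aux continuous_intros Kc)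
  have int3: "(\<lambda>u. ?q * exp (- ?q * u)) integrable_on {0..t}"
    by (intro integrable_continuous_interval continuous_intros)
  have "(\<Sum>n<N. \<Sum>s'\<in>A. wk_trans_n R v p (Suc n) t s s' * m s')
      = (\<Sum>n<N. \<Sum>s'\<in>A. integral {0..t} (\<lambda>u. exp (- ?q * u) * (\<Sum>\<sigma>\<in>?S. ?r \<sigma> * wk_trans_n R v p n (t - u) \<sigma> s') * m s'))"
    by (simp only: trans_n_Suc_integral[OF p0 p1 v0] integral_mult_left)
  also have "\<dots> = integral {0..t} (\<lambda>u. \<Sum>n<N. \<Sum>s'\<in>A. exp (- ?q * u) * (\<Sum>\<sigma>\<in>?S. ?r \<sigma> * wk_trans_n R v p n (t - u) \<sigma> s') * m s')"
    apply (subst integral_sum)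
      apply simp
     apply (intro integrable_sum finA integrable_on_mult_left int1)
    apply (rule sum.cong[OF refl])
    apply (subst integral_sum[OF finA])
     apply (intro integrable_on_mult_left int1)
    apply simp
    done
  also have "\<dots> = integral {0..t} (\<lambda>u. exp (- ?q * u) * (\<Sum>\<sigma>\<in>?S. ?r \<sigma> * K \<sigma> (t - u)))"
    by (rule integral_cong) (simp add: K_def sum_distrib_left sum_distrib_right mult.assoc sum.swap[of _ ?S])
  also have "\<dots> \<le> integral {0..t} (\<lambda>u. ?q * exp (- ?q * u) * m s)"
  proof (rule integral_le[OF int2])
    show "(\<lambda>u. ?q * exp (- ?q * u) * m s) integrable_on {0..t}"
      by (intro integrable_continuous_interval continuous_intros)
    fix u assume u: "u \<in> {0..t}"
    have "(\<Sum>\<sigma>\<in>?S. ?r \<sigma> * K \<sigma> (t - u)) \<le> (\<Sum>\<sigma>\<in>?S. ?r \<sigma> * m \<sigma>)"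
    proof (rule sum_mono)
      fix \<sigma> assume "\<sigma> \<in> ?S"
      hence "\<sigma> \<in> Good" using closed[OF Suc.prems(1)] by blast
      hence "K \<sigma> (t - u) \<le> m \<sigma>" unfolding K_def using Suc.IH u by auto
      thus "?r \<sigma> * K \<sigma> (t - u) \<le> ?r \<sigma> * m \<sigma>"
        by (intro mult_left_mono rate_nonneg[OF p0 p1 v0])
    qed
    also have "\<dots> \<le> ?q * m s" using harm Suc.prems by auto
    finally show "exp (- ?q * u) * (\<Sum>\<sigma>\<in>?S. ?r \<sigma> * K \<sigma> (t - u)) \<le> ?q * exp (- ?q * u) * m s"
      by (simp add: mult_left_mono mult.commute mult.left_commute)
  qed
  also have "\<dots> = (1 - exp (- ?q * t)) * m s"
    using exp_integral[OF Suc.prems(2), of ?q] by simp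
  finally have A: "(\<Sum>n<N. \<Sum>s'\<in>A. wk_trans_n R v p (Suc n) t s s' * m s') \<le> (1 - exp (- ?q * t)) * m s" .
  have B: "(\<Sum>s'\<in>A. wk_trans_n R v p 0 t s s' * m s') \<le> exp (- ?q * t) * m s"
  proof -
    have "(\<Sum>s'\<in>A. wk_trans_n R v p 0 t s s' * m s') = (\<Sum>s'\<in>A. if s = s' then exp (- ?q * t) * m s else 0)"
      by (rule sum.cong) auto
    also have "\<dots> \<le> exp (- ?q * t) * m s" using finA mnn[OF Suc.prems(1)] by (simp add: sum.delta)
    finally show ?thesis .
  qed
  show ?case unfolding sum.lessThan_Suc_shift using A B by (simp add: algebra_simps)
qed

end

fun reach :: "nat \<Rightarrow> real \<Rightarrow> real \<Rightarrow> nat \<Rightarrow> 'd::finite wstate \<Rightarrow> 'd wstate set" where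
  "reach R v p 0 s = {s}"
| "reach R v p (Suc n) s = insert s (\<Union>\<sigma>\<in>wk_supp R v p s. reach R v p n \<sigma>)"

lemma reach_self: "s \<in> reach R v p n s"
  by (cases n) auto

lemma reach_mono_Suc[unfolded triv_forall_equality]: "reach R v p n s \<subseteq> reach R v p (Suc n) s"
proof (induction n arbitrary: s)
  case 0 then show ?case by simp
next
  case (Suc n)
  have e1: "reach R v p (Suc n) s = insert s (\<Union>\<sigma>\<in>wk_supp R v p s. reach R v p n \<sigma>)"
    by (rule reach.simps(2))
  have e2: "reach R v p (Suc (Suc n)) s = insert s (\<Union>\<sigma>\<in>wk_supp R v p s. reach R v p (Suc n) \<sigma>)"
    by (rule reach.simps(2))
  show ?case unfolding e1 e2
    by (rule Set.insert_mono, rule UN_mono[OF subset_refl Suc.IH])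
qed

lemma reach_mono: "j \<le> n \<Longrightarrow> reach R v p j s \<subseteq> reach R v p n s"
  by (induction n rule: dec_induct) (use reach_mono_Suc in blast)+

lemma reach_supp: "\<sigma> \<in> wk_supp R v p s \<Longrightarrow> reach R v p n \<sigma> \<subseteq> reach R v p (Suc n) s"
  by auto

lemma trans_n_zero: "s' \<notin> reach R v p n s \<Longrightarrow> wk_trans_n R v p n t s s' = 0"
proof (induction n arbitrary: s t)
  case 0 then show ?case by auto
next
  case (Suc n)
  have "\<And>\<sigma> u. \<sigma> \<in> wk_supp R v p s \<Longrightarrow> wk_trans_n R v p n u \<sigma> s' = 0"
    using Suc by auto
  then show ?case by simp
qed

context
  fixes Good :: "'d::finite wstate set" and R :: nat and v p :: real
  assumes closed: "\<And>s. s \<in> Good \<Longrightarrow> wk_supp R v p s \<subseteq> Good"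
    and fin: "\<And>s. s \<in> Good \<Longrightarrow> finite (wk_supp R v p s)"
    and p0: "0 \<le> p" and p1: "p \<le> 1" and v0: "0 \<le> v"
begin

lemma reach_good: "s \<in> Good \<Longrightarrow> reach R v p n s \<subseteq> Good"
proof (induction n arbitrary: s)
  case 0 then show ?case by simp
next
  case (Suc n)
  have "\<sigma> \<in> wk_supp R v p s \<Longrightarrow> reach R v p n \<sigma> \<subseteq> Good" for \<sigma>
    by (meson Suc.IH closed[OF Suc.prems] subsetD)
  then show ?case unfolding reach.simps using Suc.prems by (simp add: UN_subset_iff)
qed

lemma reach_finite: "s \<in> Good \<Longrightarrow> finite (reach R v p n s)"
proof (induction n arbitrary: s)
  case 0 then show ?case by simp
next
  case (Suc n)
  have "finite (wk_supp R v p s)" using fin Suc.prems .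
  moreover have "\<sigma> \<in> wk_supp R v p s \<Longrightarrow> finite (reach R v p n \<sigma>)" for \<sigma>
    by (meson Suc.IH closed[OF Suc.prems] subsetD)
  ultimately show ?case by simp
qed

lemma CK:
  assumes "s \<in> Good" "t \<ge> 0" "h \<ge> 0"
  shows "wk_trans_n R v p n (t + h) s s' =
    (\<Sum>j\<le>n. \<Sum>s''\<in>reach R v p n s. wk_trans_n R v p j t s s'' * wk_trans_n R v p (n - j) h s'' s')"
  using assms(1,2)
proof (induction n arbitrary: s t)
  case 0
  then show ?case by (simp add: ring_distribs mult_exp_exp algebra_simps)
next
  case (Suc n)
  let ?q = "wk_out R v p s" and ?S = "wk_supp R v p s" and ?r = "wk_rate R v p s"
  let ?P = "wk_trans_n R v p"
  define RS where "RS = reach R v p (Suc n) s"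
  have finRS: "finite RS" unfolding RS_def using reach_finite Suc.prems by blast
  have sRS: "s \<in> RS" unfolding RS_def by (rule reach_self)
  define G where "G w = (\<Sum>\<sigma>\<in>?S. ?r \<sigma> * ?P n w \<sigma> s')" for w
  define f where "f u = exp (- ?q * u) * G (t + h - u)" for u
  have Gc: "continuous_on {0..T} G" for T
    unfolding G_def by (intro continuous_intros trans_n_cont[OF p0 p1 v0])
  have fint: "f integrable_on {0..t+h}"
    unfolding f_def by (intro integrable_continuous_interval conv_cont_aux Gc)
  have lhs: "?P (Suc n) (t + h) s s' = integral {0..t+h} f"
    unfolding f_def G_def by (rule trans_n_Suc_integral[OF p0 p1 v0])
  also have "\<dots> = integral {0..t} f + integral {t..t+h} f"
    using fint Suc.prems assms(3) by (intro Henstock_Kurzweil_Integration.integral_combine[symmetric]) auto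
  finally have split: "?P (Suc n) (t + h) s s' = integral {0..t} f + integral {t..t+h} f" .
  have second: "integral {t..t+h} f = exp (- ?q * t) * ?P (Suc n) h s s'"
  proof -
    have "integral {t..t+h} f = integral {0..h} (f \<circ> (+) t)"
      using integral_shift_Icc_real[of 0 h f t] by (simp add: add.commute)
    also have "\<dots> = integral {0..h} (\<lambda>w. exp (- ?q * t) * (exp (- ?q * w) * G (h - w)))"
      by (rule integral_cong) (simp add: f_def ring_distribs mult_exp_exp algebra_simps)
    also have "\<dots> = exp (- ?q * t) * integral {0..h} (\<lambda>w. exp (- ?q * w) * G (h - w))"
      by simp
    also have "\<dots> = exp (- ?q * t) * ?P (Suc n) h s s'"
      unfolding G_def by (simp only: trans_n_Suc_integral[OF p0 p1 v0])
    finally show ?thesis .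
  qed
  define g where "g j s'' u = exp (- ?q * u) * (\<Sum>\<sigma>\<in>?S. ?r \<sigma> * ?P j (t - u) \<sigma> s'')" for j s'' u
  have gint: "g j s'' integrable_on {0..t}" for j s''
    unfolding g_def by (intro integrable_continuous_interval conv_cont_aux continuous_intros trans_n_cont[OF p0 p1 v0])
  have first: "integral {0..t} f = (\<Sum>j\<le>n. \<Sum>s''\<in>RS. ?P (Suc j) t s s'' * ?P (n - j) h s'' s')"
  proof -
    have "integral {0..t} f = integral {0..t} (\<lambda>u. \<Sum>j\<le>n. \<Sum>s''\<in>RS. g j s'' u * ?P (n - j) h s'' s')"
    proof (rule integral_cong)
      fix u assume u: "u \<in> {0..t}"
      have "G (t + h - u) = (\<Sum>\<sigma>\<in>?S. ?r \<sigma> * (\<Sum>j\<le>n. \<Sum>s''\<in>RS. ?P j (t - u) \<sigma> s'' * ?P (n - j) h s'' s'))"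
        unfolding G_def
      proof (rule sum.cong[OF refl])
        fix \<sigma> assume \<sigma>: "\<sigma> \<in> ?S"
        have \<sigma>G: "\<sigma> \<in> Good" using closed[OF Suc.prems(1)] \<sigma> by blast
        have "?P n (t + h - u) \<sigma> s' = ?P n ((t - u) + h) \<sigma> s'" by (simp add: algebra_simps)
        also have "\<dots> = (\<Sum>j\<le>n. \<Sum>s''\<in>reach R v p n \<sigma>. ?P j (t - u) \<sigma> s'' * ?P (n - j) h s'' s')"
          using Suc.IH[OF \<sigma>G] u by simp
        also have "\<dots> = (\<Sum>j\<le>n. \<Sum>s''\<in>RS. ?P j (t - u) \<sigma> s'' * ?P (n - j) h s'' s')"
        proof (rule sum.cong[OF refl])
          fix j assume j: "j \<in> {..n}"
          show "(\<Sum>s''\<in>reach R v p n \<sigma>. ?P j (t - u) \<sigma> s'' * ?P (n - j) h s'' s') = (\<Sum>s''\<in>RS. ?P j (t - u) \<sigma> s'' * ?P (n - j) h s'' s')"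
          proof (rule sum.mono_neutral_left[OF finRS])
            show "reach R v p n \<sigma> \<subseteq> RS" unfolding RS_def using reach_supp[OF \<sigma>] .
            show "\<forall>s''\<in>RS - reach R v p n \<sigma>. ?P j (t - u) \<sigma> s'' * ?P (n - j) h s'' s' = 0"
            proof
              fix s'' assume "s'' \<in> RS - reach R v p n \<sigma>"
              hence "s'' \<notin> reach R v p j \<sigma>" using j reach_mono[where j=j and n=n and R=R and v=v and p=p and s=\<sigma>] by blast
              thus "?P j (t - u) \<sigma> s'' * ?P (n - j) h s'' s' = 0" by (simp add: trans_n_zero)
            qed
          qed
        qed
        finally show "?r \<sigma> * ?P n (t + h - u) \<sigma> s' = ?r \<sigma> * (\<Sum>j\<le>n. \<Sum>s''\<in>RS. ?P j (t - u) \<sigma> s'' * ?P (n - j) h s'' s')"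
          by simp
      qed
      also have "exp (- ?q * u) * \<dots> = (\<Sum>j\<le>n. \<Sum>s''\<in>RS. g j s'' u * ?P (n - j) h s'' s')"
        unfolding g_def
        by (simp add: sum_distrib_left sum_distrib_right mult.assoc mult.left_commute sum.swap[of _ ?S])
      finally show "f u = (\<Sum>j\<le>n. \<Sum>s''\<in>RS. g j s'' u * ?P (n - j) h s'' s')"
        unfolding f_def by simp
    qed
    also have "\<dots> = (\<Sum>j\<le>n. \<Sum>s''\<in>RS. integral {0..t} (g j s'') * ?P (n - j) h s'' s')"
      apply (subst integral_sum)
        apply simp
       apply (intro integrable_sum finRS integrable_on_mult_left gint)
      apply (rule sum.cong[OF refl])
      apply (subst integral_sum[OF finRS])
       apply (intro integrable_on_mult_left gint)
      apply simp
      done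
    also have "\<dots> = (\<Sum>j\<le>n. \<Sum>s''\<in>RS. ?P (Suc j) t s s'' * ?P (n - j) h s'' s')"
      unfolding g_def by (simp only: trans_n_Suc_integral[OF p0 p1 v0])
    finally show ?thesis .
  qed
  have zero_term: "(\<Sum>s''\<in>RS. ?P 0 t s s'' * ?P (Suc n) h s'' s') = exp (- ?q * t) * ?P (Suc n) h s s'"
  proof -
    have "(\<Sum>s''\<in>RS. ?P 0 t s s'' * ?P (Suc n) h s'' s') = (\<Sum>s''\<in>RS. if s = s'' then exp (- ?q * t) * ?P (Suc n) h s s' else 0)"
      by (rule sum.cong) auto
    also have "\<dots> = exp (- ?q * t) * ?P (Suc n) h s s'" using finRS sRS by (simp add: sum.delta)
    finally show ?thesis .
  qed
  have "(\<Sum>j\<le>Suc n. \<Sum>s''\<in>RS. ?P j t s s'' * ?P (Suc n - j) h s'' s') =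
     (\<Sum>s''\<in>RS. ?P 0 t s s'' * ?P (Suc n - 0) h s'' s') + (\<Sum>j\<le>n. \<Sum>s''\<in>RS. ?P (Suc j) t s s'' * ?P (Suc n - Suc j) h s'' s')"
    by (rule sum.atMost_Suc_shift)
  also have "\<dots> = exp (- ?q * t) * ?P (Suc n) h s s' + (\<Sum>j\<le>n. \<Sum>s''\<in>RS. ?P (Suc j) t s s'' * ?P (n - j) h s'' s')"
    using zero_term by (simp only: diff_Suc_Suc minus_nat.diff_0)
  finally show ?case using split first second unfolding RS_def by (simp only: add.commute)
qed

end


context
  fixes Good :: "'d::finite wstate set" and R :: nat and v p :: real and m :: "'d wstate \<Rightarrow> real"
  assumes closed: "\<And>s. s \<in> Good \<Longrightarrow> wk_supp R v p s \<subseteq> Good"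
    and fin: "\<And>s. s \<in> Good \<Longrightarrow> finite (wk_supp R v p s)"
    and p0: "0 \<le> p" and p1: "p \<le> 1" and v0: "0 \<le> v"
    and mnn: "\<And>s. s \<in> Good \<Longrightarrow> m s \<ge> 0"
    and harm: "\<And>s. s \<in> Good \<Longrightarrow> (\<Sum>\<sigma>\<in>wk_supp R v p s. wk_rate R v p s \<sigma> * m \<sigma>) \<le> wk_out R v p s * m s"
begin

lemma partial_le1: "s \<in> Good \<Longrightarrow> t \<ge> 0 \<Longrightarrow> (\<Sum>n<N. wk_trans_n R v p n t s s') \<le> 1"
  using superharm[OF p0 p1 v0 closed, where m="\<lambda>_. 1" and A="{s'}" and N=N and s=s and t=t]
  by (simp add: wk_out_def)

lemma summ: "s \<in> Good \<Longrightarrow> t \<ge> 0 \<Longrightarrow> summable (\<lambda>n. wk_trans_n R v p n t s s')"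
  by (rule summableI_nonneg_bounded[where x=1]) (auto intro: trans_n_nonneg[OF p0 p1 v0] partial_le1)

lemma P_notgood: "s \<in> Good \<Longrightarrow> s' \<notin> Good \<Longrightarrow> wk_trans_n R v p n t s s' = 0"
  using reach_good[OF closed fin p0 p1 v0, of s n] by (intro trans_n_zero) blast

lemma Pm_nonneg: "s \<in> Good \<Longrightarrow> t \<ge> 0 \<Longrightarrow> 0 \<le> wk_trans_n R v p n t s s' * m s'"
  by (cases "s' \<in> Good") (auto simp: P_notgood intro!: mult_nonneg_nonneg trans_n_nonneg[OF p0 p1 v0] mnn)

lemma g_nonneg: "s \<in> Good \<Longrightarrow> t \<ge> 0 \<Longrightarrow> 0 \<le> wk_trans R v p t s s' * m s'"
proof -
  assume a: "s \<in> Good" "t \<ge> 0"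
  have "wk_trans R v p t s s' * m s' = (\<Sum>n. wk_trans_n R v p n t s s' * m s')"
    unfolding wk_trans_def using summ[OF a] by (rule suminf_mult2)
  also have "\<dots> \<ge> 0" 
    using summ[OF a] Pm_nonneg[OF a] by (intro suminf_nonneg summable_mult2) auto
  finally show ?thesis .
qed

lemma finsum_eq: "s \<in> Good \<Longrightarrow> t \<ge> 0 \<Longrightarrow>
   (\<Sum>s'\<in>A. wk_trans R v p t s s' * m s') = (\<Sum>n. \<Sum>s'\<in>A. wk_trans_n R v p n t s s' * m s')"
proof -
  assume a: "s \<in> Good" "t \<ge> 0"
  have "(\<Sum>s'\<in>A. wk_trans R v p t s s' * m s') = (\<Sum>s'\<in>A. \<Sum>n. wk_trans_n R v p n t s s' * m s')"
    unfolding wk_trans_def using summ[OF a] by (intro sum.cong refl suminf_mult2)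
  also have "\<dots> = (\<Sum>n. \<Sum>s'\<in>A. wk_trans_n R v p n t s s' * m s')"
    using summ[OF a] by (intro suminf_sum[symmetric] summable_mult2)
  finally show ?thesis .
qed

lemma summ_A: "s \<in> Good \<Longrightarrow> t \<ge> 0 \<Longrightarrow> summable (\<lambda>n. \<Sum>s'\<in>A. wk_trans_n R v p n t s s' * m s')"
  using summ by (intro summable_sum summable_mult2) auto

lemma finsum_le: "s \<in> Good \<Longrightarrow> t \<ge> 0 \<Longrightarrow> finite A \<Longrightarrow>
   (\<Sum>s'\<in>A. wk_trans R v p t s s' * m s') \<le> m s"
  unfolding finsum_eq
  by (rule suminf_le_const[OF summ_A]) (auto intro: superharm[OF p0 p1 v0 closed mnn harm])

lemma summable_on_g: "s \<in> Good \<Longrightarrow> t \<ge> 0 \<Longrightarrow> (\<lambda>s'. wk_trans R v p t s s' * m s') summable_on UNIV"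
  by (rule nonneg_bdd_above_summable_on)
     (auto intro!: g_nonneg bdd_aboveI[where M="m s"] finsum_le)

lemma partial_mono:
  assumes s: "s \<in> Good" and t: "t \<ge> 0" and h: "h \<ge> 0" and finA: "finite A"
  shows "(\<Sum>n<N. \<Sum>s'\<in>A. wk_trans_n R v p n (t + h) s s' * m s')
         \<le> infsum (\<lambda>s'. wk_trans R v p t s s' * m s') UNIV"
proof -
  let ?P = "wk_trans_n R v p"
  define B where "B = reach R v p N s"
  have finB: "finite B" unfolding B_def by (rule reach_finite[OF closed fin p0 p1 v0 s])
  have BG: "B \<subseteq> Good" unfolding B_def by (rule reach_good[OF closed fin p0 p1 v0 s])
  define Y where "Y j l = (\<Sum>s'\<in>A. \<Sum>s''\<in>B. ?P j t s s'' * ?P l h s'' s' * m s')" for j l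
  have Ynn: "0 \<le> Y j l" for j l
    unfolding Y_def
  proof (intro sum_nonneg)
    fix s' s'' assume "s'' \<in> B"
    hence "s'' \<in> Good" using BG by blast
    thus "0 \<le> ?P j t s s'' * ?P l h s'' s' * m s'"
      using Pm_nonneg[where s=s'' and t=h and n=l and s'=s'] h trans_n_nonneg[OF p0 p1 v0 t, where n=j and s=s and s'=s'']
      by (simp add: mult.assoc)
  qed
  have step1: "(\<Sum>s'\<in>A. ?P n (t + h) s s' * m s') = (\<Sum>j\<le>n. Y j (n - j))" if n: "n < N" for n
  proof -
    have "?P n (t + h) s s' = (\<Sum>j\<le>n. \<Sum>s''\<in>B. ?P j t s s'' * ?P (n - j) h s'' s')" for s'
    proof -
      have "?P n (t + h) s s' = (\<Sum>j\<le>n. \<Sum>s''\<in>reach R v p n s. ?P j t s s'' * ?P (n - j) h s'' s')"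
        by (rule CK[OF closed fin p0 p1 v0 s t h])
      also have "\<dots> = (\<Sum>j\<le>n. \<Sum>s''\<in>B. ?P j t s s'' * ?P (n - j) h s'' s')"
      proof (rule sum.cong[OF refl])
        fix j assume j: "j \<in> {..n}"
        show "(\<Sum>s''\<in>reach R v p n s. ?P j t s s'' * ?P (n - j) h s'' s') = (\<Sum>s''\<in>B. ?P j t s s'' * ?P (n - j) h s'' s')"
        proof (rule sum.mono_neutral_left[OF finB])
          show "reach R v p n s \<subseteq> B" unfolding B_def using n by (intro reach_mono) simp
          show "\<forall>s''\<in>B - reach R v p n s. ?P j t s s'' * ?P (n - j) h s'' s' = 0"
          proof
            fix s'' assume "s'' \<in> B - reach R v p n s"
            hence "s'' \<notin> reach R v p j s" using j reach_mono[where j=j and n=n and R=R and v=v and p=p and s=s] by blast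
            thus "?P j t s s'' * ?P (n - j) h s'' s' = 0" by (simp add: trans_n_zero)
          qed
        qed
      qed
      finally show ?thesis .
    qed
    hence "(\<Sum>s'\<in>A. ?P n (t + h) s s' * m s') = (\<Sum>s'\<in>A. \<Sum>j\<le>n. \<Sum>s''\<in>B. ?P j t s s'' * ?P (n - j) h s'' s' * m s')"
      by (simp add: sum_distrib_right)
    also have "\<dots> = (\<Sum>j\<le>n. Y j (n - j))"
      unfolding Y_def by (rule sum.swap)
    finally show ?thesis .
  qed
  have "(\<Sum>n<N. \<Sum>s'\<in>A. ?P n (t + h) s s' * m s') = (\<Sum>n<N. \<Sum>j\<le>n. Y j (n - j))"
    using step1 by (intro sum.cong) auto
  also have "\<dots> = (\<Sum>(j, l)\<in>{(j, l). j + l < N}. Y j l)"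
    by (rule sum.triangle_reindex[symmetric])
  also have "\<dots> \<le> (\<Sum>(j, l)\<in>{..<N} \<times> {..<N}. Y j l)"
    by (rule sum_mono2) (auto intro: Ynn)
  also have "\<dots> = (\<Sum>j<N. \<Sum>l<N. Y j l)"
    by (rule sum.cartesian_product[symmetric])
  also have "\<dots> = (\<Sum>j<N. \<Sum>s''\<in>B. ?P j t s s'' * (\<Sum>l<N. \<Sum>s'\<in>A. ?P l h s'' s' * m s'))"
    unfolding Y_def
    apply (rule sum.cong[OF refl])
    apply (simp add: sum_distrib_left mult.assoc)
    apply (rule trans[OF sum.cong[OF refl sum.swap]])
    apply (rule sum.swap)
    done
  also have "\<dots> \<le> (\<Sum>j<N. \<Sum>s''\<in>B. ?P j t s s'' * m s'')"
  proof (intro sum_mono mult_left_mono)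
    fix j s'' assume "s'' \<in> B"
    hence "s'' \<in> Good" using BG by blast
    thus "(\<Sum>l<N. \<Sum>s'\<in>A. ?P l h s'' s' * m s') \<le> m s''"
      using superharm[OF p0 p1 v0 closed mnn harm finA, where s=s'' and t=h and N=N] h by blast
    show "0 \<le> ?P j t s s''" by (rule trans_n_nonneg[OF p0 p1 v0 t])
  qed
  also have "\<dots> = (\<Sum>s''\<in>B. (\<Sum>j<N. ?P j t s s'') * m s'')"
    by (simp add: sum_distrib_right sum.swap[of _ "{..<N}"])
  also have "\<dots> \<le> (\<Sum>s''\<in>B. wk_trans R v p t s s'' * m s'')"
  proof (intro sum_mono mult_right_mono)
    fix s'' assume "s'' \<in> B"
    hence "s'' \<in> Good" using BG by blast
    thus "0 \<le> m s''" by (rule mnn)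
    show "(\<Sum>j<N. ?P j t s s'') \<le> wk_trans R v p t s s''"
      unfolding wk_trans_def
      by (rule sum_le_suminf[OF summ[OF s t]]) (auto intro: trans_n_nonneg[OF p0 p1 v0 t])
  qed
  also have "\<dots> \<le> infsum (\<lambda>s'. wk_trans R v p t s s' * m s') UNIV"
    by (rule finite_sum_le_infsum[OF summable_on_g[OF s t] finB]) (auto intro: g_nonneg[OF s t])
  finally show ?thesis .
qed

lemma F_mono:
  assumes s: "s \<in> Good" and t: "t \<ge> 0" and h: "h \<ge> 0"
  shows "infsum (\<lambda>s'. wk_trans R v p (t + h) s s' * m s') UNIV
         \<le> infsum (\<lambda>s'. wk_trans R v p t s s' * m s') UNIV"
proof (rule infsum_le_finite_sums)
  have th: "t + h \<ge> 0" using t h by simp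
  show "(\<lambda>s'. wk_trans R v p (t + h) s s' * m s') summable_on UNIV"
    by (rule summable_on_g[OF s th])
  fix A :: "'d wstate set" assume A: "finite A" "A \<subseteq> UNIV"
  show "(\<Sum>s'\<in>A. wk_trans R v p (t + h) s s' * m s') \<le> infsum (\<lambda>s'. wk_trans R v p t s s' * m s') UNIV"
    unfolding finsum_eq[OF s th]
    by (rule suminf_le_const[OF summ_A[OF s th]]) (rule partial_mono[OF s t h A(1)])
qed

lemma F_conv:
  assumes s: "s \<in> Good"
  shows "\<exists>L. ((\<lambda>t. infsum (\<lambda>s'. wk_trans R v p t s s' * m s') UNIV) \<longlongrightarrow> L) at_top"
proof -
  define F where "F t = infsum (\<lambda>s'. wk_trans R v p t s s' * m s') UNIV" for t
  have Fnn: "t \<ge> 0 \<Longrightarrow> 0 \<le> F t" for t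
    unfolding F_def by (rule infsum_nonneg) (rule g_nonneg[OF s])
  have Fmono: "0 \<le> t \<Longrightarrow> t \<le> t' \<Longrightarrow> F t' \<le> F t" for t t'
    using F_mono[OF s, of t "t' - t"] unfolding F_def by simp
  define L where "L = Inf (F ` {0..})"
  have bdd: "bdd_below (F ` {0..})" using Fnn by (intro bdd_belowI[where m=0]) auto
  have Lle: "t \<ge> 0 \<Longrightarrow> L \<le> F t" for t
    unfolding L_def by (rule cInf_lower[OF _ bdd]) auto
  have "(F \<longlongrightarrow> L) at_top"
  proof (rule order_tendstoI)
    fix a assume "a < L"
    thus "\<forall>\<^sub>F t in at_top. a < F t"
      using Lle by (intro eventually_at_top_linorderI[where c=0]) (auto intro: less_le_trans)
  next
    fix a assume "L < a"
    then obtain x where x: "x \<in> F ` {0..}" "x < a"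
      unfolding L_def using cInf_lessD[of "F ` {0..}" a] by auto
    then obtain t0 where t0: "t0 \<ge> 0" "F t0 < a" by auto
    show "\<forall>\<^sub>F t in at_top. F t < a"
      by (intro eventually_at_top_linorderI[where c=t0]) (use Fmono t0 in \<open>auto intro: le_less_trans\<close>)
  qed
  thus ?thesis unfolding F_def by blast
qed

end


definition goodS :: "'d::finite wstate set" where
  "goodS = {(xs, E, F). finite E \<and> finite F \<and> E \<inter> F = {} \<and> E \<subseteq> edges \<and> F \<subseteq> edges}"

definition FT :: "'d::finite wstate \<Rightarrow> (int^'d) set \<Rightarrow> 'd wstate" where
  "FT s e = (case s of (xs, E, F) \<Rightarrow> (xs, E - {e}, F - {e}))"

definition DD :: "nat \<Rightarrow> 'd::finite wstate \<Rightarrow> nat \<Rightarrow> (int^'d) set set" where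
  "DD R s i = (case s of (xs, E, F) \<Rightarrow> edges_ball (xs ! i) R - (E \<union> F))"

definition JT :: "nat \<Rightarrow> 'd::finite wstate \<Rightarrow> nat \<Rightarrow> int^'d \<Rightarrow> (int^'d) set set \<Rightarrow> 'd wstate" where
  "JT R s i y E' = (case s of (xs, E, F) \<Rightarrow>
     ((if conn (\<lambda>e. e \<in> E \<union> E') (ball1 (xs ! i) R) (xs ! i) y then xs[i := y] else xs),
      E \<union> E', F \<union> (DD R s i - E')))"

definition WW :: "nat \<Rightarrow> real \<Rightarrow> 'd::finite wstate \<Rightarrow> nat \<Rightarrow> (int^'d) set set \<Rightarrow> real" where
  "WW R p s i E' = p ^ card E' * (1 - p) ^ card (DD R s i - E') * jrate TYPE('d) R"

definition Cand :: "nat \<Rightarrow> 'd::finite wstate \<Rightarrow> 'd wstate set" where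
  "Cand R s = FT s ` (fst (snd s) \<union> snd (snd s)) \<union>
     (\<Union>i<length (fst s). \<Union>y\<in>ball1 (fst s ! i) R - {fst s ! i}. \<Union>E'\<in>Pow (DD R s i). {JT R s i y E'})"

lemma card_filter_sum: "finite A \<Longrightarrow> real (card {x\<in>A. P x}) = (\<Sum>x\<in>A. if P x then 1 else 0)"
  by (simp add: sum.inter_filter[symmetric])

lemma rate_eq:
  assumes "finite E" "finite F"
  shows "wk_rate R v p (xs, E, F) s' = (if s' = (xs, E, F) then 0 else
     v * (\<Sum>e\<in>E \<union> F. if s' = FT (xs, E, F) e then 1 else 0) +
     (\<Sum>i<length xs. \<Sum>y\<in>ball1 (xs ! i) R - {xs ! i}. \<Sum>E'\<in>Pow (DD R (xs, E, F) i).
        if s' = JT R (xs, E, F) i y E' then WW R p (xs, E, F) i E' else 0))"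
proof -
  have c: "real (card {e \<in> E \<union> F. s' = (xs, E - {e}, F - {e})}) = (\<Sum>e\<in>E \<union> F. if s' = (xs, E - {e}, F - {e}) then 1 else 0)"
    using assms by (intro card_filter_sum) simp
  show ?thesis
    unfolding wk_rate_def Let_def prod.case JT_def WW_def DD_def FT_def c ..
qed

lemma supp_Cand: "wk_supp R v p (s::'d::finite wstate) \<subseteq> Cand R s"
proof
  fix s' assume "s' \<in> wk_supp R v p s"
  hence nz: "wk_rate R v p s s' \<noteq> 0" by (simp add: wk_supp_def)
  obtain xs E F where s: "s = (xs, E, F)" by (cases s)
  show "s' \<in> Cand R s"
  proof (rule ccontr)
    assume "s' \<notin> Cand R s"
    hence a: "\<And>e. e \<in> E \<union> F \<Longrightarrow> s' \<noteq> (xs, E - {e}, F - {e})"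
      and b: "\<And>i y E'. i < length xs \<Longrightarrow> y \<in> ball1 (xs ! i) R - {xs ! i} \<Longrightarrow> E' \<in> Pow (DD R s i) \<Longrightarrow> s' \<noteq> JT R s i y E'"
      unfolding Cand_def s FT_def by auto
    have e: "{e \<in> E \<union> F. s' = (xs, E - {e}, F - {e})} = {}" using a by auto
    have "wk_rate R v p s s' = 0"
      unfolding wk_rate_def s Let_def prod.case e using b
      by (auto simp: JT_def DD_def s intro!: sum.neutral)
    thus False using nz by simp
  qed
qed

lemma finite_Cand: "s \<in> goodS \<Longrightarrow> finite (Cand R (s::'d::finite wstate))"
  unfolding Cand_def goodS_def DD_def
  by (auto intro!: finite_UN_I finite_ball1 finite_edges_ball split: prod.splits)

lemma Cand_good: "s \<in> goodS \<Longrightarrow> Cand R (s::'d::finite wstate) \<subseteq> goodS"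
proof -
  assume s: "s \<in> goodS"
  obtain xs E F where sd: "s = (xs, E, F)" by (cases s)
  have g: "finite E" "finite F" "E \<inter> F = {}" "E \<subseteq> edges" "F \<subseteq> edges" using s sd by (auto simp: goodS_def)
  have fe: "finite (edges_ball x R)" "edges_ball x R \<subseteq> edges" for x :: "int^'d"
    by (rule finite_edges_ball, rule edges_ball_sub)
  show ?thesis
    unfolding Cand_def sd using g fe
    by (auto simp: goodS_def FT_def JT_def DD_def Pow_def intro: finite_subset) (use edges_ball_sub in blast)+
qed

lemma supp_good: "s \<in> goodS \<Longrightarrow> wk_supp R v p (s::'d::finite wstate) \<subseteq> goodS"
  using supp_Cand Cand_good by blast

lemma supp_finite: "s \<in> goodS \<Longrightarrow> finite (wk_supp R v p (s::'d::finite wstate))"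
  using supp_Cand finite_Cand by (metis finite_subset)

lemma dist3:
  fixes a :: "'e \<Rightarrow> 's \<Rightarrow> real"
  shows "(\<Sum>\<sigma>\<in>X. (v * (\<Sum>e\<in>A. a e \<sigma>) + (\<Sum>i\<in>I. \<Sum>y\<in>Y i. \<Sum>E'\<in>Z i y. b i y E' \<sigma>)) * g \<sigma>) =
    v * (\<Sum>e\<in>A. \<Sum>\<sigma>\<in>X. a e \<sigma> * g \<sigma>) + (\<Sum>i\<in>I. \<Sum>y\<in>Y i. \<Sum>E'\<in>Z i y. \<Sum>\<sigma>\<in>X. b i y E' \<sigma> * g \<sigma>)"
proof -
  have 1: "(\<Sum>\<sigma>\<in>X. (v * (\<Sum>e\<in>A. a e \<sigma>)) * g \<sigma>) = v * (\<Sum>e\<in>A. \<Sum>\<sigma>\<in>X. a e \<sigma> * g \<sigma>)"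
    by (simp add: sum_distrib_left sum_distrib_right mult.assoc sum.swap[of _ X])
  have 2: "(\<Sum>\<sigma>\<in>X. (\<Sum>i\<in>I. \<Sum>y\<in>Y i. \<Sum>E'\<in>Z i y. b i y E' \<sigma>) * g \<sigma>) = (\<Sum>i\<in>I. \<Sum>y\<in>Y i. \<Sum>E'\<in>Z i y. \<Sum>\<sigma>\<in>X. b i y E' \<sigma> * g \<sigma>)"
  proof -
    have "(\<Sum>\<sigma>\<in>X. (\<Sum>i\<in>I. \<Sum>y\<in>Y i. \<Sum>E'\<in>Z i y. b i y E' \<sigma>) * g \<sigma>) = (\<Sum>\<sigma>\<in>X. \<Sum>i\<in>I. \<Sum>y\<in>Y i. \<Sum>E'\<in>Z i y. b i y E' \<sigma> * g \<sigma>)"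
      by (simp add: sum_distrib_right)
    also have "\<dots> = (\<Sum>i\<in>I. \<Sum>\<sigma>\<in>X. \<Sum>y\<in>Y i. \<Sum>E'\<in>Z i y. b i y E' \<sigma> * g \<sigma>)" by (rule sum.swap)
    also have "\<dots> = (\<Sum>i\<in>I. \<Sum>y\<in>Y i. \<Sum>\<sigma>\<in>X. \<Sum>E'\<in>Z i y. b i y E' \<sigma> * g \<sigma>)" by (rule sum.cong[OF refl], rule sum.swap)
    also have "\<dots> = (\<Sum>i\<in>I. \<Sum>y\<in>Y i. \<Sum>E'\<in>Z i y. \<Sum>\<sigma>\<in>X. b i y E' \<sigma> * g \<sigma>)" by (rule sum.cong[OF refl], rule sum.cong[OF refl], rule sum.swap)
    finally show ?thesis .
  qed
  show ?thesis using 1 2 by (simp add: distrib_right sum.distrib)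
qed

lemma delta_mult: "finite X \<Longrightarrow> a \<in> X \<Longrightarrow> (\<Sum>\<sigma>\<in>X. (if \<sigma> = a then c else 0) * g \<sigma>) = (c::real) * g a"
proof -
  assume "finite X" "a \<in> X"
  have "(\<Sum>\<sigma>\<in>X. (if \<sigma> = a then c else 0) * g \<sigma>) = (\<Sum>\<sigma>\<in>X. if \<sigma> = a then c * g a else 0)"
    by (rule sum.cong) auto
  thus ?thesis using \<open>finite X\<close> \<open>a \<in> X\<close> by simp
qed

lemma gen_eq:
  assumes s: "s \<in> goodS" and sd: "s = (xs, E, F)"
  shows "(\<Sum>\<sigma>\<in>wk_supp R v p s. wk_rate R v p s \<sigma> * (\<phi> \<sigma> - \<phi> s)) =
    v * (\<Sum>e\<in>E \<union> F. \<phi> (FT s e) - \<phi> s) +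
    (\<Sum>i<length xs. \<Sum>y\<in>ball1 (xs ! i) R - {xs ! i}. \<Sum>E'\<in>Pow (DD R s i).
        WW R p s i E' * (\<phi> (JT R s i y E') - \<phi> s))"
proof -
  have g: "finite E" "finite F" using s sd by (auto simp: goodS_def)
  have finC: "finite (Cand R s)" by (rule finite_Cand[OF s])
  have "(\<Sum>\<sigma>\<in>wk_supp R v p s. wk_rate R v p s \<sigma> * (\<phi> \<sigma> - \<phi> s)) = (\<Sum>\<sigma>\<in>Cand R s. wk_rate R v p s \<sigma> * (\<phi> \<sigma> - \<phi> s))"
    by (rule sum.mono_neutral_left[OF finC supp_Cand]) (auto simp: wk_supp_def)
  also have "\<dots> = (\<Sum>\<sigma>\<in>Cand R s. (v * (\<Sum>e\<in>E \<union> F. if \<sigma> = FT s e then 1 else 0) +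
     (\<Sum>i<length xs. \<Sum>y\<in>ball1 (xs ! i) R - {xs ! i}. \<Sum>E'\<in>Pow (DD R s i).
        if \<sigma> = JT R s i y E' then WW R p s i E' else 0)) * (\<phi> \<sigma> - \<phi> s))"
  proof (rule sum.cong[OF refl])
    fix \<sigma> show "wk_rate R v p s \<sigma> * (\<phi> \<sigma> - \<phi> s) = (v * (\<Sum>e\<in>E \<union> F. if \<sigma> = FT s e then 1 else 0) +
     (\<Sum>i<length xs. \<Sum>y\<in>ball1 (xs ! i) R - {xs ! i}. \<Sum>E'\<in>Pow (DD R s i).
        if \<sigma> = JT R s i y E' then WW R p s i E' else 0)) * (\<phi> \<sigma> - \<phi> s)"
      unfolding sd by (cases "\<sigma> = (xs, E, F)") (simp_all add: rate_eq[OF g])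
  qed
  also have "\<dots> = v * (\<Sum>e\<in>E \<union> F. \<Sum>\<sigma>\<in>Cand R s. (if \<sigma> = FT s e then 1 else 0) * (\<phi> \<sigma> - \<phi> s)) +
    (\<Sum>i<length xs. \<Sum>y\<in>ball1 (xs ! i) R - {xs ! i}. \<Sum>E'\<in>Pow (DD R s i).
        \<Sum>\<sigma>\<in>Cand R s. (if \<sigma> = JT R s i y E' then WW R p s i E' else 0) * (\<phi> \<sigma> - \<phi> s))"
    by (rule dist3)
  also have "\<dots> = v * (\<Sum>e\<in>E \<union> F. \<phi> (FT s e) - \<phi> s) +
    (\<Sum>i<length xs. \<Sum>y\<in>ball1 (xs ! i) R - {xs ! i}. \<Sum>E'\<in>Pow (DD R s i).
        WW R p s i E' * (\<phi> (JT R s i y E') - \<phi> s))"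
  proof -
    have "e \<in> E \<union> F \<Longrightarrow> FT s e \<in> Cand R s" for e unfolding Cand_def sd by auto
    moreover have "i < length xs \<Longrightarrow> y \<in> ball1 (xs ! i) R - {xs ! i} \<Longrightarrow> E' \<in> Pow (DD R s i) \<Longrightarrow> JT R s i y E' \<in> Cand R s" for i y E'
      unfolding Cand_def sd fst_conv snd_conv by blast
    ultimately show ?thesis
      by (simp add: delta_mult[OF finC])
  qed
  finally show ?thesis .
qed

lemma harm_of_gen:
  assumes "(\<Sum>\<sigma>\<in>wk_supp R v p s. wk_rate R v p s \<sigma> * (m \<sigma> - m s)) \<le> 0"
  shows "(\<Sum>\<sigma>\<in>wk_supp R v p s. wk_rate R v p s \<sigma> * m \<sigma>) \<le> wk_out R v p s * m s"
  using assms by (simp add: wk_out_def right_diff_distrib sum_subtractf sum_distrib_right)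


definition EV :: "(int^'d::finite) set \<Rightarrow> (int^'d) set set \<Rightarrow> (int^'d) set set
    \<Rightarrow> ((int ^ 'd \<Rightarrow> bool) \<times> ((int ^ 'd) set \<Rightarrow> bool)) set" where
  "EV C E F = {c. (\<forall>x\<in>C. fst c x) \<and> (\<forall>e\<in>E. snd c e) \<and> (\<forall>e\<in>F. \<not> snd c e)}"

lemma pred_fst: "Measurable.pred cfg_space (\<lambda>c. fst c x)"
  unfolding cfg_space_def by measurable

lemma pred_snd: "e \<in> edges \<Longrightarrow> Measurable.pred cfg_space (\<lambda>c. snd c e)"
  unfolding cfg_space_def by measurable

lemma EV_sets: "finite C \<Longrightarrow> finite E \<Longrightarrow> finite F \<Longrightarrow> E \<subseteq> edges \<Longrightarrow> F \<subseteq> edges \<Longrightarrow>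
  EV C E F \<inter> space cfg_space \<in> sets cfg_space"
proof -
  assume a: "finite C" "finite E" "finite F" "E \<subseteq> edges" "F \<subseteq> edges"
  have "Measurable.pred cfg_space (\<lambda>c. (\<forall>x\<in>C. fst c x) \<and> (\<forall>e\<in>E. snd c e) \<and> (\<forall>e\<in>F. \<not> snd c e))"
    using a pred_fst pred_snd by (intro pred_intros_logic pred_intros_finite) auto
  hence "{c \<in> space cfg_space. (\<forall>x\<in>C. fst c x) \<and> (\<forall>e\<in>E. snd c e) \<and> (\<forall>e\<in>F. \<not> snd c e)} \<in> sets cfg_space"
    by (rule predE)
  moreover have "EV C E F \<inter> space cfg_space = {c \<in> space cfg_space. (\<forall>x\<in>C. fst c x) \<and> (\<forall>e\<in>E. snd c e) \<and> (\<forall>e\<in>F. \<not> snd c e)}"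
    unfolding EV_def by auto
  ultimately show ?thesis by simp
qed

lemma binom_subsets:
  fixes p :: real
  shows "finite D \<Longrightarrow> (\<Sum>E'\<in>Pow D. p ^ card E' * (1 - p) ^ card (D - E')) = 1"
proof (induction D rule: finite_induct)
  case empty
  then show ?case by simp
next
  case (insert a D)
  have inj: "inj_on (insert a) (Pow D)" using insert.hyps(2) by (auto simp: inj_on_def)
  have disj: "Pow D \<inter> insert a ` Pow D = {}" using insert.hyps(2) by auto
  have fin: "finite (Pow D)" "finite (insert a ` Pow D)" using insert.hyps(1) by auto
  have A: "(\<Sum>E'\<in>Pow D. p ^ card E' * (1 - p) ^ card (insert a D - E')) = (1 - p) * (\<Sum>E'\<in>Pow D. p ^ card E' * (1 - p) ^ card (D - E'))"
  proof -
    have "E' \<in> Pow D \<Longrightarrow> card (insert a D - E') = Suc (card (D - E'))" for E'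
      using insert.hyps by (subst insert_Diff_if) (auto simp: card_insert_if)
    thus ?thesis by (simp add: sum_distrib_left mult_ac)
  qed
  have B: "(\<Sum>E'\<in>insert a ` Pow D. p ^ card E' * (1 - p) ^ card (insert a D - E')) = p * (\<Sum>E'\<in>Pow D. p ^ card E' * (1 - p) ^ card (D - E'))"
  proof -
    have "(\<Sum>E'\<in>insert a ` Pow D. p ^ card E' * (1 - p) ^ card (insert a D - E')) = (\<Sum>E'\<in>Pow D. p ^ card (insert a E') * (1 - p) ^ card (insert a D - insert a E'))"
      by (rule sum.reindex[OF inj, unfolded comp_def])
    also have "\<dots> = (\<Sum>E'\<in>Pow D. p * (p ^ card E' * (1 - p) ^ card (D - E')))"
    proof (rule sum.cong[OF refl])
      fix E' assume "E' \<in> Pow D"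
      hence "a \<notin> E'" "finite E'" using insert.hyps by (auto intro: finite_subset)
      moreover have "insert a D - insert a E' = D - E'" using insert.hyps by auto
      ultimately show "p ^ card (insert a E') * (1 - p) ^ card (insert a D - insert a E') = p * (p ^ card E' * (1 - p) ^ card (D - E'))"
        by simp
    qed
    finally show ?thesis by (simp add: sum_distrib_left)
  qed
  have "(\<Sum>E'\<in>Pow (insert a D). p ^ card E' * (1 - p) ^ card (insert a D - E')) =
     (\<Sum>E'\<in>Pow D. p ^ card E' * (1 - p) ^ card (insert a D - E')) + (\<Sum>E'\<in>insert a ` Pow D. p ^ card E' * (1 - p) ^ card (insert a D - E'))"
    unfolding Pow_insert by (rule sum.union_disjoint[OF fin disj])
  then show ?case using A B insert.IH by simp
qed

lemma conn_cong:
  assumes "\<And>e. e \<in> edges_ball x R \<Longrightarrow> op e = op' e"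
  shows "conn op (ball1 x R) u w = conn op' (ball1 x R) u w"
proof -
  have "(\<lambda>a b. a \<in> ball1 x R \<and> b \<in> ball1 x R \<and> adj a b \<and> op {a, b}) = (\<lambda>a b. a \<in> ball1 x R \<and> b \<in> ball1 x R \<and> adj a b \<and> op' {a, b})"
  proof (intro ext)
    fix a b
    show "(a \<in> ball1 x R \<and> b \<in> ball1 x R \<and> adj a b \<and> op {a, b}) = (a \<in> ball1 x R \<and> b \<in> ball1 x R \<and> adj a b \<and> op' {a, b})"
      using assms[of "{a, b}"] unfolding edges_ball_def by blast
  qed
  thus ?thesis unfolding conn_def by simp
qed

definition NN :: "real \<Rightarrow> (int^'d::finite) set set \<Rightarrow> (int^'d) set set \<Rightarrow> real" where
  "NN p E F = p ^ card E * (1 - p) ^ card F"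

lemma EV_split:
  assumes "E' \<subseteq> D" "D \<inter> (E \<union> F) = {}"
  shows "c \<in> EV C (E \<union> E') (F \<union> (D - E')) \<longleftrightarrow> c \<in> EV C E F \<and> E' = {e \<in> D. snd c e}"
  using assms unfolding EV_def by auto

lemma ind_split:
  assumes "finite D" "D \<inter> (E \<union> F) = {}"
  shows "(indicator (EV C E F) c :: real) = (\<Sum>E'\<in>Pow D. indicator (EV C (E \<union> E') (F \<union> (D - E'))) c)"
proof -
  have "(\<Sum>E'\<in>Pow D. (indicator (EV C (E \<union> E') (F \<union> (D - E'))) c :: real)) =
        (\<Sum>E'\<in>Pow D. if E' = {e \<in> D. snd c e} then indicator (EV C E F) c else 0)"
    by (rule sum.cong[OF refl]) (use EV_split[OF _ assms(2)] in \<open>auto simp: indicator_def\<close>)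
  also have "\<dots> = indicator (EV C E F) c" using assms(1) by (simp add: sum.delta')
  finally show ?thesis by simp
qed

lemma NN_split:
  assumes "finite E" "finite F" "finite D" "E' \<subseteq> D" "D \<inter> (E \<union> F) = {}" "E \<inter> F = {}"
  shows "NN p (E \<union> E') (F \<union> (D - E')) = NN p E F * (p ^ card E' * (1 - p) ^ card (D - E'))"
proof -
  have "card (E \<union> E') = card E + card E'" using assms by (intro card_Un_disjoint) (auto intro: finite_subset)
  moreover have "card (F \<union> (D - E')) = card F + card (D - E')" using assms by (intro card_Un_disjoint) auto
  ultimately show ?thesis unfolding NN_def by (simp add: power_add mult_ac)
qed


lemma int_nest:
  fixes f :: "'x \<Rightarrow> 'y \<Rightarrow> 'z \<Rightarrow> 'a \<Rightarrow> real" and g :: "'x \<Rightarrow> 'y \<Rightarrow> 'z \<Rightarrow> 'a \<Rightarrow> real"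
  assumes "\<And>x y z. x \<in> X \<Longrightarrow> y \<in> Y x \<Longrightarrow> z \<in> Z x \<Longrightarrow> integrable M (f x y z)"
    and "\<And>x y z. x \<in> X \<Longrightarrow> y \<in> Y x \<Longrightarrow> z \<in> Z x \<Longrightarrow> integrable M (g x y z)"
  shows "integrable M (\<lambda>c. \<Sum>x\<in>X. \<Sum>y\<in>Y x. a * (\<Sum>z\<in>Z x. b x y z * (f x y z c - g x y z c)))"
    "integral\<^sup>L M (\<lambda>c. \<Sum>x\<in>X. \<Sum>y\<in>Y x. a * (\<Sum>z\<in>Z x. b x y z * (f x y z c - g x y z c))) =
     (\<Sum>x\<in>X. \<Sum>y\<in>Y x. a * (\<Sum>z\<in>Z x. b x y z * (integral\<^sup>L M (f x y z) - integral\<^sup>L M (g x y z))))"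
proof -
  have i1: "integrable M (\<lambda>c. b x y z * (f x y z c - g x y z c))" if "x \<in> X" "y \<in> Y x" "z \<in> Z x" for x y z
    using assms that by auto
  have i2: "integrable M (\<lambda>c. a * (\<Sum>z\<in>Z x. b x y z * (f x y z c - g x y z c)))" if "x \<in> X" "y \<in> Y x" for x y
    using i1 that by auto
  have i3: "integrable M (\<lambda>c. \<Sum>y\<in>Y x. a * (\<Sum>z\<in>Z x. b x y z * (f x y z c - g x y z c)))" if "x \<in> X" for x
    using i2 that by auto
  show "integrable M (\<lambda>c. \<Sum>x\<in>X. \<Sum>y\<in>Y x. a * (\<Sum>z\<in>Z x. b x y z * (f x y z c - g x y z c)))"
    using i3 by auto
  have "integral\<^sup>L M (\<lambda>c. \<Sum>x\<in>X. \<Sum>y\<in>Y x. a * (\<Sum>z\<in>Z x. b x y z * (f x y z c - g x y z c))) =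
     (\<Sum>x\<in>X. integral\<^sup>L M (\<lambda>c. \<Sum>y\<in>Y x. a * (\<Sum>z\<in>Z x. b x y z * (f x y z c - g x y z c))))"
    by (rule Bochner_Integration.integral_sum) (rule i3)
  also have "\<dots> = (\<Sum>x\<in>X. \<Sum>y\<in>Y x. integral\<^sup>L M (\<lambda>c. a * (\<Sum>z\<in>Z x. b x y z * (f x y z c - g x y z c))))"
    by (rule sum.cong[OF refl], rule Bochner_Integration.integral_sum) (rule i2)
  also have "\<dots> = (\<Sum>x\<in>X. \<Sum>y\<in>Y x. a * (\<Sum>z\<in>Z x. integral\<^sup>L M (\<lambda>c. b x y z * (f x y z c - g x y z c))))"
    by (intro sum.cong refl, subst integral_mult_right_zero, rule arg_cong[where f="(*) a"], rule Bochner_Integration.integral_sum) (rule i1)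
  also have "\<dots> = (\<Sum>x\<in>X. \<Sum>y\<in>Y x. a * (\<Sum>z\<in>Z x. b x y z * (integral\<^sup>L M (f x y z) - integral\<^sup>L M (g x y z))))"
    using assms by (intro sum.cong refl arg_cong[where f="(*) a"]) simp
  finally show "integral\<^sup>L M (\<lambda>c. \<Sum>x\<in>X. \<Sum>y\<in>Y x. a * (\<Sum>z\<in>Z x. b x y z * (f x y z c - g x y z c))) =
     (\<Sum>x\<in>X. \<Sum>y\<in>Y x. a * (\<Sum>z\<in>Z x. b x y z * (integral\<^sup>L M (f x y z) - integral\<^sup>L M (g x y z))))" .
qed

lemma int_edge:
  fixes f g :: "'e \<Rightarrow> 'a \<Rightarrow> real" and h :: "'a \<Rightarrow> real"
  assumes "\<And>e. e \<in> X \<Longrightarrow> integrable M (f e)" "\<And>e. e \<in> X \<Longrightarrow> integrable M (g e)" "integrable M h"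
  shows "integrable M (\<lambda>c. \<Sum>e\<in>X. (if P e then a * f e c else b * g e c) - w * h c)"
    "integral\<^sup>L M (\<lambda>c. \<Sum>e\<in>X. (if P e then a * f e c else b * g e c) - w * h c) =
     (\<Sum>e\<in>X. (if P e then a * integral\<^sup>L M (f e) else b * integral\<^sup>L M (g e)) - w * integral\<^sup>L M h)"
proof -
  have i1: "integrable M (\<lambda>c. (if P e then a * f e c else b * g e c) - w * h c)" if "e \<in> X" for e
    using assms that by (cases "P e") auto
  show "integrable M (\<lambda>c. \<Sum>e\<in>X. (if P e then a * f e c else b * g e c) - w * h c)" using i1 by auto
  have "integral\<^sup>L M (\<lambda>c. \<Sum>e\<in>X. (if P e then a * f e c else b * g e c) - w * h c) =
     (\<Sum>e\<in>X. integral\<^sup>L M (\<lambda>c. (if P e then a * f e c else b * g e c) - w * h c))"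
    by (rule Bochner_Integration.integral_sum) (rule i1)
  also have "\<dots> = (\<Sum>e\<in>X. (if P e then a * integral\<^sup>L M (f e) else b * integral\<^sup>L M (g e)) - w * integral\<^sup>L M h)"
  proof (rule sum.cong[OF refl])
    fix e assume "e \<in> X"
    thus "integral\<^sup>L M (\<lambda>c. (if P e then a * f e c else b * g e c) - w * h c) = (if P e then a * integral\<^sup>L M (f e) else b * integral\<^sup>L M (g e)) - w * integral\<^sup>L M h"
      using assms by (cases "P e") simp_all
  qed
  finally show "integral\<^sup>L M (\<lambda>c. \<Sum>e\<in>X. (if P e then a * f e c else b * g e c) - w * h c) =
     (\<Sum>e\<in>X. (if P e then a * integral\<^sup>L M (f e) else b * integral\<^sup>L M (g e)) - w * integral\<^sup>L M h)" .
qed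

context
  fixes R :: nat and v p :: real and \<mu> :: "((int ^ 'd::finite \<Rightarrow> bool) \<times> ((int ^ 'd) set \<Rightarrow> bool)) measure"
  assumes stat: "voter_stationary R v p \<mu>" and p0: "0 < p" and p1: "p < 1" and v0: "0 < v"
begin

lemma prob: "prob_space \<mu>" using stat by (simp add: voter_stationary_def)
lemma sets_eq: "sets \<mu> = sets cfg_space" using stat by (simp add: voter_stationary_def)
lemma space_eq: "space \<mu> = space cfg_space" using sets_eq by (rule sets_eq_imp_space_eq)

definition mt :: "(int^'d) set \<Rightarrow> (int^'d) set set \<Rightarrow> (int^'d) set set \<Rightarrow> real" where
  "mt C E F = measure \<mu> (EV C E F \<inter> space \<mu>)"

definition fg :: "(int^'d) set \<Rightarrow> (int^'d) set set \<Rightarrow> (int^'d) set set \<Rightarrow> bool" where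
  "fg C E F \<longleftrightarrow> finite C \<and> finite E \<and> finite F \<and> E \<subseteq> edges \<and> F \<subseteq> edges"

lemma EV_sets_mu: "fg C E F \<Longrightarrow> EV C E F \<inter> space \<mu> \<in> sets \<mu>"
  unfolding sets_eq space_eq fg_def by (intro EV_sets) auto

lemma int_ind: "fg C E F \<Longrightarrow> integrable \<mu> (indicator (EV C E F) :: _ \<Rightarrow> real)"
  unfolding integrable_indicator_iff
  using EV_sets_mu finite_measure.emeasure_finite[OF prob_space.finite_measure[OF prob]]
  by (auto simp: less_top)

lemma integral_ind: "integral\<^sup>L \<mu> (indicator (EV C E F) :: _ \<Rightarrow> real) = mt C E F"
  by (simp add: mt_def)

lemma mubar_eq: "mubar p \<mu> C E F = mt C E F / NN p E F"
proof -
  have "{c \<in> space \<mu>. (\<forall>x\<in>C. fst c x) \<and> (\<forall>e\<in>E. snd c e) \<and> (\<forall>e\<in>F. \<not> snd c e)} = EV C E F \<inter> space \<mu>"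
    unfolding EV_def by auto
  thus ?thesis unfolding mubar_def mt_def NN_def by (simp add: divide_inverse mult.commute)
qed

lemma mt_nonneg: "0 \<le> mt C E F" by (simp add: mt_def)

lemma NN_pos: "0 < NN p E F" using p0 p1 by (simp add: NN_def)

lemma mt_anti: "fg C E F \<Longrightarrow> C \<subseteq> C' \<Longrightarrow> mt C' E F \<le> mt C E F"
proof -
  assume a: "fg C E F" "C \<subseteq> C'"
  have "EV C' E F \<inter> space \<mu> \<subseteq> EV C E F \<inter> space \<mu>" using a(2) unfolding EV_def by auto
  thus ?thesis unfolding mt_def
    using EV_sets_mu[OF a(1)] prob_space.finite_measure[OF prob]
    by (intro finite_measure.finite_measure_mono) auto
qed

lemma mt_split:
  assumes "fg C E F" "finite D" "D \<subseteq> edges" "D \<inter> (E \<union> F) = {}"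
  shows "mt C E F = (\<Sum>E'\<in>Pow D. mt C (E \<union> E') (F \<union> (D - E')))"
proof -
  have fgs: "E' \<in> Pow D \<Longrightarrow> fg C (E \<union> E') (F \<union> (D - E'))" for E'
    using assms unfolding fg_def by (auto intro: finite_subset)
  have "(\<lambda>c. indicator (EV C E F) c :: real) = (\<lambda>c. \<Sum>E'\<in>Pow D. indicator (EV C (E \<union> E') (F \<union> (D - E'))) c)"
    by (rule ext, rule ind_split[OF assms(2,4)])
  hence "mt C E F = integral\<^sup>L \<mu> (\<lambda>c. \<Sum>E'\<in>Pow D. indicator (EV C (E \<union> E') (F \<union> (D - E'))) c :: real)"
    using integral_ind[of C E F] by simp
  also have "\<dots> = (\<Sum>E'\<in>Pow D. mt C (E \<union> E') (F \<union> (D - E')))"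
    by (subst Bochner_Integration.integral_sum) (auto intro: int_ind[OF fgs] simp: mt_def)
  finally show ?thesis .
qed

lemma l1norm_sym: "l1norm (x - y) = l1norm (y - (x::int^'d))"
  unfolding l1norm_def by (intro sum.cong refl) (simp add: abs_minus_commute)

lemma l1norm_zero: "l1norm (z::int^'d) = 0 \<longleftrightarrow> z = 0"
proof -
  have "l1norm z = 0 \<longleftrightarrow> (\<forall>i\<in>UNIV. \<bar>z $ i\<bar> = 0)"
    unfolding l1norm_def by (rule sum_nonneg_eq_0_iff) auto
  thus ?thesis by (simp add: vec_eq_iff)
qed

lemma l1norm_nonneg: "0 \<le> l1norm (z::int^'d)"
  unfolding l1norm_def by (rule sum_nonneg) auto

lemma Yset: "{y. 1 \<le> l1norm (x - y) \<and> l1norm (x - y) \<le> int R} = ball1 x R - {x::int^'d}"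
proof -
  have "1 \<le> l1norm (x - y) \<longleftrightarrow> x \<noteq> y" for y
    using l1norm_zero[of "x - y"] l1norm_nonneg[of "x - y"] by auto
  thus ?thesis unfolding ball1_def using l1norm_sym by auto
qed

definition cf :: "bool \<Rightarrow> real" where "cf b = (if b then 1 else 0)"

lemma cf_nonneg: "0 \<le> cf b" by (simp add: cf_def)

lemma ind_split_pt:
  assumes "E' \<subseteq> D" "D \<inter> (E \<union> F) = {}"
  shows "(indicator (EV C (E \<union> E') (F \<union> (D - E'))) c :: real) = (if E' = {e \<in> D. snd c e} then indicator (EV C E F) c else 0)"
  using EV_split[OF assms] by (auto simp: indicator_def)

lemma jump_pt:
  assumes x: "x \<in> C" and EF: "E \<inter> F = {}" and finD: "finite (edges_ball x R)"
  shows "(if conn (snd c) (ball1 x R) x y then indicator (EV C E F) ((fst c)(x := fst c y), snd c) - indicator (EV C E F) c else 0)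
   = (\<Sum>E'\<in>Pow (edges_ball x R - (E \<union> F)). cf (conn (\<lambda>e. e \<in> E \<union> E') (ball1 x R) x y) *
        (indicator (EV (insert y (C - {x})) (E \<union> E') (F \<union> (edges_ball x R - (E \<union> F) - E'))) c
         - indicator (EV C (E \<union> E') (F \<union> (edges_ball x R - (E \<union> F) - E'))) c :: real))"
proof -
  define D where "D = edges_ball x R - (E \<union> F)"
  define E0 where "E0 = {e \<in> D. snd c e}"
  have DEF: "D \<inter> (E \<union> F) = {}" unfolding D_def by auto
  have finD': "finite D" unfolding D_def using finD by simp
  have E0D: "E0 \<in> Pow D" unfolding E0_def by auto
  have i1: "(indicator (EV C E F) ((fst c)(x := fst c y), snd c) :: real) = indicator (EV (insert y (C - {x})) E F) c"
    using x unfolding EV_def indicator_def by auto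
  have "(\<Sum>E'\<in>Pow D. cf (conn (\<lambda>e. e \<in> E \<union> E') (ball1 x R) x y) *
        (indicator (EV (insert y (C - {x})) (E \<union> E') (F \<union> (D - E'))) c - indicator (EV C (E \<union> E') (F \<union> (D - E'))) c :: real))
      = (\<Sum>E'\<in>Pow D. if E' = E0 then cf (conn (\<lambda>e. e \<in> E \<union> E0) (ball1 x R) x y) *
        (indicator (EV (insert y (C - {x})) E F) c - indicator (EV C E F) c) else 0)"
    by (rule sum.cong[OF refl]) (auto simp: ind_split_pt[OF _ DEF] E0_def)
  also have "\<dots> = cf (conn (\<lambda>e. e \<in> E \<union> E0) (ball1 x R) x y) *
        (indicator (EV (insert y (C - {x})) E F) c - indicator (EV C E F) c)"
    using finD' E0D by (simp add: sum.delta')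
  also have "\<dots> = (if conn (snd c) (ball1 x R) x y then indicator (EV (insert y (C - {x})) E F) c - indicator (EV C E F) c else 0)"
  proof (cases "c \<in> EV (insert y (C - {x})) E F \<or> c \<in> EV C E F")
    case True
    hence base: "\<forall>e\<in>E. snd c e" "\<forall>e\<in>F. \<not> snd c e" unfolding EV_def by auto
    have "conn (snd c) (ball1 x R) x y = conn (\<lambda>e. e \<in> E \<union> E0) (ball1 x R) x y"
    proof (rule conn_cong)
      fix e assume "e \<in> edges_ball x R"
      thus "snd c e = (e \<in> E \<union> E0)" using base EF unfolding E0_def D_def by auto
    qed
    thus ?thesis by (simp add: cf_def)
  next
    case False
    thus ?thesis by (simp add: indicator_def)
  qed
  finally show ?thesis unfolding D_def i1 by simp
qed

lemma edge_pt:
  assumes "e \<in> E \<union> F" "E \<inter> F = {}"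
  shows "p * v * (indicator (EV C E F) (fst c, (snd c)(e := True)) - indicator (EV C E F) c) +
         (1 - p) * v * (indicator (EV C E F) (fst c, (snd c)(e := False)) - indicator (EV C E F) c)
       = (if e \<in> E then p * v * indicator (EV C (E - {e}) F) c else (1 - p) * v * indicator (EV C E (F - {e})) c)
         - v * (indicator (EV C E F) c :: real)"
proof (cases "e \<in> E")
  case True
  hence nF: "e \<notin> F" using assms by auto
  have a: "(indicator (EV C E F) (fst c, (snd c)(e := True)) :: real) = indicator (EV C (E - {e}) F) c"
    using True nF unfolding EV_def indicator_def by auto
  have b: "(indicator (EV C E F) (fst c, (snd c)(e := False)) :: real) = 0"
    using True unfolding EV_def indicator_def by auto
  show ?thesis using True by (simp add: a b algebra_simps)
next
  case False
  hence F: "e \<in> F" using assms by auto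
  have a: "(indicator (EV C E F) (fst c, (snd c)(e := True)) :: real) = 0"
    using F unfolding EV_def indicator_def by auto
  have b: "(indicator (EV C E F) (fst c, (snd c)(e := False)) :: real) = indicator (EV C E (F - {e})) c"
    using F False unfolding EV_def indicator_def by auto
  show ?thesis using False by (simp add: a b algebra_simps)
qed

lemma vg_pt:
  assumes EF: "E \<inter> F = {}"
  shows "voter_gen R v p TYPE('d) C (E \<union> F) (indicator (EV C E F)) c =
    (\<Sum>x\<in>C. \<Sum>y\<in>ball1 x R - {x}. jrate TYPE('d) R *
       (\<Sum>E'\<in>Pow (edges_ball x R - (E \<union> F)). cf (conn (\<lambda>e. e \<in> E \<union> E') (ball1 x R) x y) *
        (indicator (EV (insert y (C - {x})) (E \<union> E') (F \<union> (edges_ball x R - (E \<union> F) - E'))) c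
         - indicator (EV C (E \<union> E') (F \<union> (edges_ball x R - (E \<union> F) - E'))) c)))
    + (\<Sum>e\<in>E \<union> F. (if e \<in> E then p * v * indicator (EV C (E - {e}) F) c else (1 - p) * v * indicator (EV C E (F - {e})) c)
         - v * indicator (EV C E F) c)"
proof -
  obtain \<eta> \<zeta> where c: "c = (\<eta>, \<zeta>)" by (cases c)
  have J: "(if conn \<zeta> (ball1 x R) x y then indicator (EV C E F) (\<eta>(x := \<eta> y), \<zeta>) - indicator (EV C E F) (\<eta>, \<zeta>) else 0)
   = (\<Sum>E'\<in>Pow (edges_ball x R - (E \<union> F)). cf (conn (\<lambda>e. e \<in> E \<union> E') (ball1 x R) x y) *
        (indicator (EV (insert y (C - {x})) (E \<union> E') (F \<union> (edges_ball x R - (E \<union> F) - E'))) c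
         - indicator (EV C (E \<union> E') (F \<union> (edges_ball x R - (E \<union> F) - E'))) c :: real))" if "x \<in> C" for x y
    using jump_pt[OF that EF finite_edges_ball, where y=y and c=c] unfolding c fst_conv snd_conv by simp
  have Ed: "p * v * (indicator (EV C E F) (\<eta>, \<zeta>(e := True)) - indicator (EV C E F) (\<eta>, \<zeta>)) +
         (1 - p) * v * (indicator (EV C E F) (\<eta>, \<zeta>(e := False)) - indicator (EV C E F) (\<eta>, \<zeta>))
       = (if e \<in> E then p * v * indicator (EV C (E - {e}) F) c else (1 - p) * v * indicator (EV C E (F - {e})) c)
         - v * (indicator (EV C E F) c :: real)" if "e \<in> E \<union> F" for e
    using edge_pt[OF that EF, where C=C and c=c] unfolding c fst_conv snd_conv by simp
  show ?thesis
    unfolding voter_gen_def c prod.case Yset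
    apply (rule arg_cong2[where f="(+)"])
     apply (rule sum.cong[OF refl], rule sum.cong[OF refl])
     apply (simp only: J[unfolded c])
    apply (rule sum.cong[OF refl])
    apply (rule Ed[unfolded c])
    apply assumption
    done
qed

definition mm :: "'d wstate \<Rightarrow> real" where
  "mm \<sigma> = mubar p \<mu> (set (fst \<sigma>)) (fst (snd \<sigma>)) (snd (snd \<sigma>))"

context
  fixes xs :: "(int^'d) list" and E F :: "(int^'d) set set"
  assumes gd: "(xs, E, F) \<in> goodS"
begin

lemma gd_facts: "finite E" "finite F" "E \<inter> F = {}" "E \<subseteq> edges" "F \<subseteq> edges"
  using gd by (auto simp: goodS_def)

lemma fgJ: "E' \<in> Pow (edges_ball x R - (E \<union> F)) \<Longrightarrow> finite C' \<Longrightarrow> fg C' (E \<union> E') (F \<union> (edges_ball x R - (E \<union> F) - E'))"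
  using gd_facts finite_edges_ball[of x R] edges_ball_sub[of x R] unfolding fg_def
  by (auto intro: finite_subset)

lemma fgE: "finite C' \<Longrightarrow> fg C' (E - {e}) F" "finite C' \<Longrightarrow> fg C' E (F - {e})" "finite C' \<Longrightarrow> fg C' E F"
  using gd_facts unfolding fg_def by auto

lemma stat0: "integral\<^sup>L \<mu> (voter_gen R v p TYPE('d) (set xs) (E \<union> F) (indicator (EV (set xs) E F))) = 0"
proof -
  have "cylinder (set xs) (E \<union> F) (indicator (EV (set xs) E F) :: _ \<Rightarrow> real)"
    unfolding cylinder_def EV_def indicator_def by auto
  thus ?thesis using stat gd_facts unfolding voter_stationary_def by auto
qed

lemma vg_int: "integral\<^sup>L \<mu> (voter_gen R v p TYPE('d) (set xs) (E \<union> F) (indicator (EV (set xs) E F))) =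
    (\<Sum>x\<in>set xs. \<Sum>y\<in>ball1 x R - {x}. jrate TYPE('d) R *
       (\<Sum>E'\<in>Pow (edges_ball x R - (E \<union> F)). cf (conn (\<lambda>e. e \<in> E \<union> E') (ball1 x R) x y) *
        (mt (insert y (set xs - {x})) (E \<union> E') (F \<union> (edges_ball x R - (E \<union> F) - E'))
         - mt (set xs) (E \<union> E') (F \<union> (edges_ball x R - (E \<union> F) - E')))))
    + (\<Sum>e\<in>E \<union> F. (if e \<in> E then p * v * mt (set xs) (E - {e}) F else (1 - p) * v * mt (set xs) E (F - {e}))
         - v * mt (set xs) E F)"
proof -
  let ?C = "set xs"
  have IJ: "integrable \<mu> (\<lambda>c. indicator (EV C' (E \<union> E') (F \<union> (edges_ball x R - (E \<union> F) - E'))) c :: real)"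
    if "E' \<in> Pow (edges_ball x R - (E \<union> F))" "finite C'" for C' E' x
    using int_ind[OF fgJ[OF that]] by simp
  have IE: "integrable \<mu> (\<lambda>c. indicator (EV ?C (E - {e}) F) c :: real)" "integrable \<mu> (\<lambda>c. indicator (EV ?C E (F - {e})) c :: real)"
    "integrable \<mu> (\<lambda>c. indicator (EV ?C E F) c :: real)" for e
    using int_ind[OF fgE(1)] int_ind[OF fgE(2)] int_ind[OF fgE(3)] by auto
  have A: "integral\<^sup>L \<mu> (\<lambda>c. (\<Sum>x\<in>?C. \<Sum>y\<in>ball1 x R - {x}. jrate TYPE('d) R *
       (\<Sum>E'\<in>Pow (edges_ball x R - (E \<union> F)). cf (conn (\<lambda>e. e \<in> E \<union> E') (ball1 x R) x y) *
        (indicator (EV (insert y (?C - {x})) (E \<union> E') (F \<union> (edges_ball x R - (E \<union> F) - E'))) c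
         - indicator (EV ?C (E \<union> E') (F \<union> (edges_ball x R - (E \<union> F) - E'))) c))))
     = (\<Sum>x\<in>?C. \<Sum>y\<in>ball1 x R - {x}. jrate TYPE('d) R *
       (\<Sum>E'\<in>Pow (edges_ball x R - (E \<union> F)). cf (conn (\<lambda>e. e \<in> E \<union> E') (ball1 x R) x y) *
        (mt (insert y (?C - {x})) (E \<union> E') (F \<union> (edges_ball x R - (E \<union> F) - E'))
         - mt ?C (E \<union> E') (F \<union> (edges_ball x R - (E \<union> F) - E')))))"
    by (subst int_nest(2)) (auto intro!: IJ simp: mt_def)
  have Aint: "integrable \<mu> (\<lambda>c. (\<Sum>x\<in>?C. \<Sum>y\<in>ball1 x R - {x}. jrate TYPE('d) R *
       (\<Sum>E'\<in>Pow (edges_ball x R - (E \<union> F)). cf (conn (\<lambda>e. e \<in> E \<union> E') (ball1 x R) x y) *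
        (indicator (EV (insert y (?C - {x})) (E \<union> E') (F \<union> (edges_ball x R - (E \<union> F) - E'))) c
         - indicator (EV ?C (E \<union> E') (F \<union> (edges_ball x R - (E \<union> F) - E'))) c :: real))))"
    by (rule int_nest(1)) (auto intro!: IJ)
  have B: "integral\<^sup>L \<mu> (\<lambda>c. (\<Sum>e\<in>E \<union> F. (if e \<in> E then p * v * indicator (EV ?C (E - {e}) F) c else (1 - p) * v * indicator (EV ?C E (F - {e})) c)
         - v * indicator (EV ?C E F) c :: real))
     = (\<Sum>e\<in>E \<union> F. (if e \<in> E then p * v * mt ?C (E - {e}) F else (1 - p) * v * mt ?C E (F - {e})) - v * mt ?C E F)"
    by (subst int_edge(2)) (auto intro!: IE simp: integral_ind mt_def cong: if_cong)
  have Bint: "integrable \<mu> (\<lambda>c. (\<Sum>e\<in>E \<union> F. (if e \<in> E then p * v * indicator (EV ?C (E - {e}) F) c else (1 - p) * v * indicator (EV ?C E (F - {e})) c)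
         - v * indicator (EV ?C E F) c :: real))"
    by (rule int_edge(1)) (auto intro!: IE)
  have "integral\<^sup>L \<mu> (voter_gen R v p TYPE('d) ?C (E \<union> F) (indicator (EV ?C E F))) =
     integral\<^sup>L \<mu> (\<lambda>c. (\<Sum>x\<in>?C. \<Sum>y\<in>ball1 x R - {x}. jrate TYPE('d) R *
       (\<Sum>E'\<in>Pow (edges_ball x R - (E \<union> F)). cf (conn (\<lambda>e. e \<in> E \<union> E') (ball1 x R) x y) *
        (indicator (EV (insert y (?C - {x})) (E \<union> E') (F \<union> (edges_ball x R - (E \<union> F) - E'))) c
         - indicator (EV ?C (E \<union> E') (F \<union> (edges_ball x R - (E \<union> F) - E'))) c)))
    + (\<Sum>e\<in>E \<union> F. (if e \<in> E then p * v * indicator (EV ?C (E - {e}) F) c else (1 - p) * v * indicator (EV ?C E (F - {e})) c)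
         - v * indicator (EV ?C E F) c))"
    by (rule Bochner_Integration.integral_cong[OF refl]) (rule vg_pt[OF gd_facts(3)])
  also note Bochner_Integration.integral_add[OF Aint Bint]
  finally show ?thesis unfolding A B .
qed

lemma aux1: "q \<noteq> 0 \<Longrightarrow> n \<noteq> 0 \<Longrightarrow> (v::real) * (a / n - b / (q * n)) = (q * v * a - v * b) / (q * n)"
  by (simp add: field_simps)


lemma NN_remove: "finite A \<Longrightarrow> e \<in> A \<Longrightarrow> NN p A B = p * NN p (A - {e}) B"
proof -
  assume "finite A" "e \<in> A"
  hence c: "card A = Suc (card (A - {e}))" by (rule card.remove)
  show ?thesis unfolding NN_def c by (simp only: power_Suc mult.assoc)
qed

lemma NN_remove2: "finite B \<Longrightarrow> e \<in> B \<Longrightarrow> NN p A B = (1 - p) * NN p A (B - {e})"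
proof -
  assume "finite B" "e \<in> B"
  hence c: "card B = Suc (card (B - {e}))" by (rule card.remove)
  show ?thesis unfolding NN_def c by (simp only: power_Suc mult.left_commute)
qed

lemma edge_walk:
  assumes e: "e \<in> E \<union> F"
  shows "v * (mm (FT (xs, E, F) e) - mm (xs, E, F)) =
    ((if e \<in> E then p * v * mt (set xs) (E - {e}) F else (1 - p) * v * mt (set xs) E (F - {e})) - v * mt (set xs) E F) / NN p E F"
proof (cases "e \<in> E")
  case True
  hence nF: "e \<notin> F" using gd_facts(3) by auto
  have N: "NN p E F = p * NN p (E - {e}) F" by (rule NN_remove[OF gd_facts(1) True])
  have a: "mm (FT (xs, E, F) e) = mt (set xs) (E - {e}) F / NN p (E - {e}) F"
    using nF by (simp add: mm_def FT_def mubar_eq)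
  have b: "mm (xs, E, F) = mt (set xs) E F / NN p E F" by (simp add: mm_def mubar_eq)
  have c: "NN p (E - {e}) F > 0" by (rule NN_pos)
  have d: "p \<noteq> 0" using p0 by simp
  show ?thesis unfolding a b N using True c d by (simp add: aux1)
next
  case False
  hence F: "e \<in> F" using e by auto
  have N: "NN p E F = (1 - p) * NN p E (F - {e})" by (rule NN_remove2[OF gd_facts(2) F])
  have a: "mm (FT (xs, E, F) e) = mt (set xs) E (F - {e}) / NN p E (F - {e})"
    using False by (simp add: mm_def FT_def mubar_eq)
  have b: "mm (xs, E, F) = mt (set xs) E F / NN p E F" by (simp add: mm_def mubar_eq)
  have c: "NN p E (F - {e}) > 0" by (rule NN_pos)
  have d: "1 - p \<noteq> 0" using p1 by simp
  show ?thesis unfolding a b N using False c d by (simp add: aux1)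
qed

lemma jump_walk:
  assumes i: "i < length xs"
  defines "D \<equiv> edges_ball (xs ! i) R - (E \<union> F)"
  shows "(\<Sum>E'\<in>Pow (DD R (xs, E, F) i). WW R p (xs, E, F) i E' * (mm (JT R (xs, E, F) i y E') - mm (xs, E, F))) =
    jrate TYPE('d) R * (\<Sum>E'\<in>Pow D. cf (conn (\<lambda>e. e \<in> E \<union> E') (ball1 (xs ! i) R) (xs ! i) y) *
       (mt (set (xs[i := y])) (E \<union> E') (F \<union> (D - E')) - mt (set xs) (E \<union> E') (F \<union> (D - E')))) / NN p E F"
proof -
  let ?N = "NN p E F" and ?j = "jrate TYPE('d) R"
  have DD: "DD R (xs, E, F) i = D" unfolding DD_def D_def by simp
  have finD: "finite D" unfolding D_def by (rule finite_Diff[OF finite_edges_ball])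
  have DE: "D \<subseteq> edges" unfolding D_def using edges_ball_sub by blast
  have DEF: "D \<inter> (E \<union> F) = {}" unfolding D_def by auto
  have Npos: "?N > 0" by (rule NN_pos)
  define xs' where "xs' E' = (if conn (\<lambda>e. e \<in> E \<union> E') (ball1 (xs ! i) R) (xs ! i) y then xs[i := y] else xs)" for E'
  have JT: "JT R (xs, E, F) i y E' = (xs' E', E \<union> E', F \<union> (D - E'))" for E'
    unfolding JT_def xs'_def DD by simp
  have t1: "WW R p (xs, E, F) i E' * mm (JT R (xs, E, F) i y E') = ?j * mt (set (xs' E')) (E \<union> E') (F \<union> (D - E')) / ?N"
    if "E' \<in> Pow D" for E'
  proof -
    have "NN p (E \<union> E') (F \<union> (D - E')) = ?N * (p ^ card E' * (1 - p) ^ card (D - E'))"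
      using that gd_facts finD DEF by (intro NN_split) auto
    moreover have "p ^ card E' * (1 - p) ^ card (D - E') > 0" using p0 p1 by simp
    moreover have "p \<noteq> 0" "p \<noteq> 1" using p0 p1 by auto
    ultimately show ?thesis unfolding JT mm_def WW_def DD using Npos
      by (simp add: mubar_eq field_simps)
  qed
  have t2: "(\<Sum>E'\<in>Pow D. WW R p (xs, E, F) i E' * mm (xs, E, F)) = ?j * (\<Sum>E'\<in>Pow D. mt (set xs) (E \<union> E') (F \<union> (D - E'))) / ?N"
  proof -
    have "(\<Sum>E'\<in>Pow D. WW R p (xs, E, F) i E' * mm (xs, E, F)) = ?j * mm (xs, E, F) * (\<Sum>E'\<in>Pow D. p ^ card E' * (1 - p) ^ card (D - E'))"
      unfolding WW_def DD by (simp add: sum_distrib_left mult_ac)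
    also have "\<dots> = ?j * mm (xs, E, F)" using binom_subsets[OF finD] by simp
    also have "\<dots> = ?j * mt (set xs) E F / ?N" by (simp add: mm_def mubar_eq)
    also have "mt (set xs) E F = (\<Sum>E'\<in>Pow D. mt (set xs) (E \<union> E') (F \<union> (D - E')))"
      using gd_facts finD DE DEF by (intro mt_split) (auto simp: fg_def)
    finally show ?thesis .
  qed
  have t3: "mt (set (xs' E')) (E \<union> E') (F \<union> (D - E')) - mt (set xs) (E \<union> E') (F \<union> (D - E')) =
     cf (conn (\<lambda>e. e \<in> E \<union> E') (ball1 (xs ! i) R) (xs ! i) y) *
       (mt (set (xs[i := y])) (E \<union> E') (F \<union> (D - E')) - mt (set xs) (E \<union> E') (F \<union> (D - E')))" for E'
    unfolding xs'_def cf_def by simp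
  have "(\<Sum>E'\<in>Pow (DD R (xs, E, F) i). WW R p (xs, E, F) i E' * (mm (JT R (xs, E, F) i y E') - mm (xs, E, F))) =
      (\<Sum>E'\<in>Pow D. WW R p (xs, E, F) i E' * mm (JT R (xs, E, F) i y E')) - (\<Sum>E'\<in>Pow D. WW R p (xs, E, F) i E' * mm (xs, E, F))"
    unfolding DD by (simp add: right_diff_distrib sum_subtractf)
  also have "\<dots> = (\<Sum>E'\<in>Pow D. ?j * mt (set (xs' E')) (E \<union> E') (F \<union> (D - E')) / ?N) - ?j * (\<Sum>E'\<in>Pow D. mt (set xs) (E \<union> E') (F \<union> (D - E'))) / ?N"
    using t1 t2 by simp
  also have "\<dots> = ?j * (\<Sum>E'\<in>Pow D. mt (set (xs' E')) (E \<union> E') (F \<union> (D - E')) - mt (set xs) (E \<union> E') (F \<union> (D - E'))) / ?N"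
  proof -
    have a: "(\<Sum>E'\<in>Pow D. ?j * mt (set (xs' E')) (E \<union> E') (F \<union> (D - E')) / ?N) = ?j * (\<Sum>E'\<in>Pow D. mt (set (xs' E')) (E \<union> E') (F \<union> (D - E'))) / ?N"
      by (simp add: sum_distrib_left sum_divide_distrib)
    show ?thesis unfolding a by (simp add: sum_subtractf right_diff_distrib diff_divide_distrib)
  qed
  also have "\<dots> = ?j * (\<Sum>E'\<in>Pow D. cf (conn (\<lambda>e. e \<in> E \<union> E') (ball1 (xs ! i) R) (xs ! i) y) *
       (mt (set (xs[i := y])) (E \<union> E') (F \<union> (D - E')) - mt (set xs) (E \<union> E') (F \<union> (D - E')))) / ?N"
    by (simp only: t3)
  finally show ?thesis .
qed

definition HH :: "int^'d \<Rightarrow> (int^'d \<Rightarrow> (int^'d) set) \<Rightarrow> real" where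
  "HH x Z = (\<Sum>y\<in>ball1 x R - {x}. jrate TYPE('d) R *
     (\<Sum>E'\<in>Pow (edges_ball x R - (E \<union> F)). cf (conn (\<lambda>e. e \<in> E \<union> E') (ball1 x R) x y) *
        (mt (Z y) (E \<union> E') (F \<union> (edges_ball x R - (E \<union> F) - E')) - mt (set xs) (E \<union> E') (F \<union> (edges_ball x R - (E \<union> F) - E')))))"

lemma HH_mono:
  assumes Z: "\<And>y. finite (Z2 y) \<and> Z2 y \<subseteq> Z1 y"
  shows "HH x Z1 \<le> HH x Z2"
  unfolding HH_def
proof (rule sum_mono, rule mult_left_mono[OF _ jrate_nonneg])
  fix y assume y: "y \<in> ball1 x R - {x}"
  show "(\<Sum>E'\<in>Pow (edges_ball x R - (E \<union> F)). cf (conn (\<lambda>e. e \<in> E \<union> E') (ball1 x R) x y) *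
        (mt (Z1 y) (E \<union> E') (F \<union> (edges_ball x R - (E \<union> F) - E')) - mt (set xs) (E \<union> E') (F \<union> (edges_ball x R - (E \<union> F) - E'))))
     \<le> (\<Sum>E'\<in>Pow (edges_ball x R - (E \<union> F)). cf (conn (\<lambda>e. e \<in> E \<union> E') (ball1 x R) x y) *
        (mt (Z2 y) (E \<union> E') (F \<union> (edges_ball x R - (E \<union> F) - E')) - mt (set xs) (E \<union> E') (F \<union> (edges_ball x R - (E \<union> F) - E'))))"
  proof (rule sum_mono)
    fix E' assume E': "E' \<in> Pow (edges_ball x R - (E \<union> F))"
    have "mt (Z1 y) (E \<union> E') (F \<union> (edges_ball x R - (E \<union> F) - E')) \<le> mt (Z2 y) (E \<union> E') (F \<union> (edges_ball x R - (E \<union> F) - E'))"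
      by (rule mt_anti[OF fgJ[OF E']]) (use Z in auto)
    thus "cf (conn (\<lambda>e. e \<in> E \<union> E') (ball1 x R) x y) *
        (mt (Z1 y) (E \<union> E') (F \<union> (edges_ball x R - (E \<union> F) - E')) - mt (set xs) (E \<union> E') (F \<union> (edges_ball x R - (E \<union> F) - E')))
      \<le> cf (conn (\<lambda>e. e \<in> E \<union> E') (ball1 x R) x y) *
        (mt (Z2 y) (E \<union> E') (F \<union> (edges_ball x R - (E \<union> F) - E')) - mt (set xs) (E \<union> E') (F \<union> (edges_ball x R - (E \<union> F) - E')))"
      by (intro mult_left_mono cf_nonneg) simp
  qed
qed

lemma HH_nonpos:
  assumes Z: "\<And>y. set xs \<subseteq> Z y"
  shows "HH x Z \<le> 0"
  unfolding HH_def
proof (rule sum_nonpos, rule mult_nonneg_nonpos[OF jrate_nonneg])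
  fix y assume y: "y \<in> ball1 x R - {x}"
  show "(\<Sum>E'\<in>Pow (edges_ball x R - (E \<union> F)). cf (conn (\<lambda>e. e \<in> E \<union> E') (ball1 x R) x y) *
        (mt (Z y) (E \<union> E') (F \<union> (edges_ball x R - (E \<union> F) - E')) - mt (set xs) (E \<union> E') (F \<union> (edges_ball x R - (E \<union> F) - E')))) \<le> 0"
  proof (rule sum_nonpos)
    fix E' assume E': "E' \<in> Pow (edges_ball x R - (E \<union> F))"
    have "mt (Z y) (E \<union> E') (F \<union> (edges_ball x R - (E \<union> F) - E')) \<le> mt (set xs) (E \<union> E') (F \<union> (edges_ball x R - (E \<union> F) - E'))"
      by (rule mt_anti[OF fgJ[OF E']]) (use Z in auto)
    thus "cf (conn (\<lambda>e. e \<in> E \<union> E') (ball1 x R) x y) *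
        (mt (Z y) (E \<union> E') (F \<union> (edges_ball x R - (E \<union> F) - E')) - mt (set xs) (E \<union> E') (F \<union> (edges_ball x R - (E \<union> F) - E'))) \<le> 0"
      by (intro mult_nonneg_nonpos cf_nonneg) simp
  qed
qed

lemma set_upd_sup: "i < length xs \<Longrightarrow> insert y (set xs - {xs ! i}) \<subseteq> set (xs[i := y])"
proof
  fix z assume i: "i < length xs" and z: "z \<in> insert y (set xs - {xs ! i})"
  show "z \<in> set (xs[i := y])"
  proof (cases "z = y")
    case True thus ?thesis using i by (simp add: set_update_memI)
  next
    case False
    then obtain j where j: "j < length xs" "xs ! j = z" "z \<noteq> xs ! i" using z by (auto simp: in_set_conv_nth)
    hence "j \<noteq> i" by auto
    hence "xs[i := y] ! j = z" using j by simp
    thus ?thesis using j by (metis length_list_update nth_mem)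
  qed
qed

lemma set_upd_dup: "i < length xs \<Longrightarrow> j < i \<Longrightarrow> xs ! j = xs ! i \<Longrightarrow> set xs \<subseteq> set (xs[i := y])"
proof
  fix z assume i: "i < length xs" and j: "j < i" "xs ! j = xs ! i" and z: "z \<in> set xs"
  show "z \<in> set (xs[i := y])"
  proof (cases "z = xs ! i")
    case True
    hence "xs[i := y] ! j = z" using i j by simp
    thus ?thesis using i j by (metis length_list_update nth_mem order.strict_trans)
  next
    case False
    thus ?thesis using set_upd_sup[OF i, of y] z by auto
  qed
qed

lemma cmp:
  "(\<Sum>i<length xs. HH (xs ! i) (\<lambda>y. set (xs[i := y]))) \<le> (\<Sum>x\<in>set xs. HH x (\<lambda>y. insert y (set xs - {x})))"
proof -
  define I0 where "I0 = {i. i < length xs \<and> (\<forall>j<i. xs ! j \<noteq> xs ! i)}"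
  have I0sub: "I0 \<subseteq> {..<length xs}" unfolding I0_def by auto
  have bij: "bij_betw (\<lambda>i. xs ! i) I0 (set xs)"
  proof (rule bij_betwI')
    fix i j assume "i \<in> I0" "j \<in> I0"
    hence a: "i < length xs" "\<forall>k<i. xs ! k \<noteq> xs ! i" "j < length xs" "\<forall>k<j. xs ! k \<noteq> xs ! j"
      unfolding I0_def by auto
    show "(xs ! i = xs ! j) = (i = j)"
    proof
      assume eq: "xs ! i = xs ! j"
      show "i = j"
      proof (rule ccontr)
        assume "i \<noteq> j"
        hence "i < j \<or> j < i" by arith
        thus False using eq a by auto
      qed
    qed simp
  next
    fix i assume "i \<in> I0" thus "xs ! i \<in> set xs" unfolding I0_def by auto
  next
    fix x assume "x \<in> set xs"
    then obtain i where i: "i < length xs" "xs ! i = x" by (auto simp: in_set_conv_nth)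
    define i0 where "i0 = (LEAST i. i < length xs \<and> xs ! i = x)"
    have "i0 < length xs \<and> xs ! i0 = x" unfolding i0_def by (rule LeastI[of _ i]) (use i in auto)
    moreover have "\<forall>j<i0. xs ! j \<noteq> xs ! i0"
    proof (intro allI impI)
      fix j assume "j < i0"
      hence "\<not> (j < length xs \<and> xs ! j = x)" unfolding i0_def using not_less_Least by blast
      thus "xs ! j \<noteq> xs ! i0" using \<open>j < i0\<close> calculation by auto
    qed
    ultimately show "\<exists>i\<in>I0. x = xs ! i" unfolding I0_def by auto
  qed
  have "(\<Sum>i<length xs. HH (xs ! i) (\<lambda>y. set (xs[i := y]))) =
        (\<Sum>i\<in>I0. HH (xs ! i) (\<lambda>y. set (xs[i := y]))) + (\<Sum>i\<in>{..<length xs} - I0. HH (xs ! i) (\<lambda>y. set (xs[i := y])))"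
    using sum.subset_diff[OF I0sub finite_lessThan] by (simp add: add.commute)
  also have "\<dots> \<le> (\<Sum>i\<in>I0. HH (xs ! i) (\<lambda>y. insert y (set xs - {xs ! i}))) + 0"
  proof (rule add_mono)
    show "(\<Sum>i\<in>I0. HH (xs ! i) (\<lambda>y. set (xs[i := y]))) \<le> (\<Sum>i\<in>I0. HH (xs ! i) (\<lambda>y. insert y (set xs - {xs ! i})))"
    proof (intro sum_mono HH_mono conjI)
      fix i y assume "i \<in> I0"
      hence i: "i < length xs" unfolding I0_def by auto
      show "finite (insert y (set xs - {xs ! i}))" by simp
      show "insert y (set xs - {xs ! i}) \<subseteq> set (xs[i := y])" by (rule set_upd_sup[OF i])
    qed
    show "(\<Sum>i\<in>{..<length xs} - I0. HH (xs ! i) (\<lambda>y. set (xs[i := y]))) \<le> 0"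
    proof (intro sum_nonpos HH_nonpos)
      fix i y assume "i \<in> {..<length xs} - I0"
      then obtain j where "i < length xs" "j < i" "xs ! j = xs ! i" unfolding I0_def by auto
      thus "set xs \<subseteq> set (xs[i := y])" by (rule set_upd_dup)
    qed
  qed
  also have "\<dots> = (\<Sum>x\<in>set xs. HH x (\<lambda>y. insert y (set xs - {x})))"
    using sum.reindex_bij_betw[OF bij, of "\<lambda>x. HH x (\<lambda>y. insert y (set xs - {x}))"] by simp
  finally show ?thesis .
qed

lemma harm_local: "(\<Sum>\<sigma>\<in>wk_supp R v p (xs, E, F). wk_rate R v p (xs, E, F) \<sigma> * (mm \<sigma> - mm (xs, E, F))) \<le> 0"
proof -
  let ?N = "NN p E F" and ?C = "set xs"
  have Npos: "?N > 0" by (rule NN_pos)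
  have "(\<Sum>\<sigma>\<in>wk_supp R v p (xs, E, F). wk_rate R v p (xs, E, F) \<sigma> * (mm \<sigma> - mm (xs, E, F))) =
    v * (\<Sum>e\<in>E \<union> F. mm (FT (xs, E, F) e) - mm (xs, E, F)) +
    (\<Sum>i<length xs. \<Sum>y\<in>ball1 (xs ! i) R - {xs ! i}. \<Sum>E'\<in>Pow (DD R (xs, E, F) i).
        WW R p (xs, E, F) i E' * (mm (JT R (xs, E, F) i y E') - mm (xs, E, F)))"
    by (rule gen_eq[OF gd refl])
  also have "\<dots> = ((\<Sum>e\<in>E \<union> F. (if e \<in> E then p * v * mt ?C (E - {e}) F else (1 - p) * v * mt ?C E (F - {e})) - v * mt ?C E F)
      + (\<Sum>i<length xs. HH (xs ! i) (\<lambda>y. set (xs[i := y])))) / ?N"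
  proof -
    have a: "v * (\<Sum>e\<in>E \<union> F. mm (FT (xs, E, F) e) - mm (xs, E, F)) =
       (\<Sum>e\<in>E \<union> F. (if e \<in> E then p * v * mt ?C (E - {e}) F else (1 - p) * v * mt ?C E (F - {e})) - v * mt ?C E F) / ?N"
      unfolding sum_distrib_left sum_divide_distrib by (intro sum.cong refl edge_walk)
    have b: "(\<Sum>i<length xs. \<Sum>y\<in>ball1 (xs ! i) R - {xs ! i}. \<Sum>E'\<in>Pow (DD R (xs, E, F) i).
        WW R p (xs, E, F) i E' * (mm (JT R (xs, E, F) i y E') - mm (xs, E, F))) = (\<Sum>i<length xs. HH (xs ! i) (\<lambda>y. set (xs[i := y]))) / ?N"
      unfolding HH_def sum_divide_distrib
      by (intro sum.cong refl) (simp add: jump_walk)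
    show ?thesis unfolding a b by (simp add: add_divide_distrib)
  qed
  also have "\<dots> \<le> ((\<Sum>e\<in>E \<union> F. (if e \<in> E then p * v * mt ?C (E - {e}) F else (1 - p) * v * mt ?C E (F - {e})) - v * mt ?C E F)
      + (\<Sum>x\<in>set xs. HH x (\<lambda>y. insert y (set xs - {x})))) / ?N"
    using Npos cmp by (intro divide_right_mono add_left_mono) auto
  also have "\<dots> = 0"
  proof -
    have "(\<Sum>x\<in>set xs. HH x (\<lambda>y. insert y (set xs - {x}))) + (\<Sum>e\<in>E \<union> F. (if e \<in> E then p * v * mt ?C (E - {e}) F else (1 - p) * v * mt ?C E (F - {e})) - v * mt ?C E F) = 0"
      using vg_int stat0 unfolding HH_def by simp
    thus ?thesis by (simp add: add.commute)
  qed
  finally show ?thesis .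
qed

end

lemma mm_nonneg: "0 \<le> mm \<sigma>"
  by (simp add: mm_def mubar_eq divide_nonneg_pos mt_nonneg NN_pos)

lemma harm_mm: "\<sigma> \<in> goodS \<Longrightarrow> (\<Sum>\<sigma>'\<in>wk_supp R v p \<sigma>. wk_rate R v p \<sigma> \<sigma>' * mm \<sigma>') \<le> wk_out R v p \<sigma> * mm \<sigma>"
proof -
  assume g: "\<sigma> \<in> goodS"
  obtain xs E F where sd: "\<sigma> = (xs, E, F)" by (cases \<sigma>)
  show ?thesis unfolding sd
    by (rule harm_of_gen, rule harm_local) (use g sd in simp)
qed

lemma final: "s0 \<in> goodS \<Longrightarrow> \<exists>L. ((\<lambda>t. wk_expect R v p \<mu> t s0) \<longlongrightarrow> L) at_top"
proof -
  assume s0: "s0 \<in> goodS"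
  have eq: "wk_expect R v p \<mu> t s0 = infsum (\<lambda>s'. wk_trans R v p t s0 s' * mm s') UNIV" for t
    by (simp add: wk_expect_def mm_def)
  have "\<exists>L. ((\<lambda>t. infsum (\<lambda>s'. wk_trans R v p t s0 s' * mm s') UNIV) \<longlongrightarrow> L) at_top"
    using p0 p1 v0
    by (intro F_conv[where Good=goodS and m=mm] supp_good supp_finite mm_nonneg harm_mm s0) auto
  thus ?thesis unfolding eq .
qed

end

theorem lemma4p12:
  fixes \<mu> :: "((int ^ 'd::finite \<Rightarrow> bool) \<times> ((int ^ 'd) set \<Rightarrow> bool)) measure"
    and R k :: nat and p v :: real and xs :: "(int ^ 'd) list"
    and E F :: "(int ^ 'd) set set"
  assumes "CARD('d) \<ge> 3"
    and "0 < p" and "p < 1" and "0 < v"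
    and "voter_stationary R v p \<mu>"
    and "length xs = k" and "distinct xs"
    and "finite E" and "finite F" and "E \<subseteq> edges" and "F \<subseteq> edges" and "E \<inter> F = {}"
  shows "\<exists>L. ((\<lambda>t. wk_expect R v p \<mu> t (xs, E, F)) \<longlongrightarrow> L) at_top"
proof -
  have "(xs, E, F) \<in> goodS" using assms by (simp add: goodS_def)
  thus ?thesis by (rule final[OF assms(5,2,3,4)])
qed


end
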